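(* Let $f\in\mathbb{R}[x,y]$ be regular in $x$, let $x=\gamma(y)$ be a Newton--Puiseux root of $f$, let $\rho=\rho(\gamma,f)$ be the contact order of $\gamma$ and $f$, and let $\tilde\gamma$ be the truncated Newton--Puiseux root associated to $\gamma$. Then: (i) If $\tilde\gamma$ is real, then $\gamma$ is a real Newton--Puiseux root of $f$. (ii) Write $f(X+\tilde\gamma(Y),Y)=\sum c_{ij}X^iY^{j/N}$. Then the multiplicity $\mathrm{mult}_\gamma f$ of $\gamma$ as a root of $f$ equals $$\min\{\, i \mid i\rho+j/N=\mathrm{ord}\, f(\tilde\gamma_\rho(y),y)\ \text{and}\ c_{ij}\neq0\,\},$$ where $\tilde\gamma_\rho$ is the $\rho$-approximation of $\tilde\gamma$. (iii) Let $g\in\mathbb{R}[x,y]$ be regular in $x$ and let $h:=\gcd(f,g)$. If $\tilde\gamma$ is a Newton--Puiseux root $\bmod\ \rho(\gamma,f)+$ of $h$, then $\gamma$ is also a Newton--Puiseux root of $g$.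
   Context: A polynomial $f$ with $f(0,0)=0$, written $f=f_m+f_{m+1}+\cdots$ ($f_k$ homogeneous of degree $k$, $f_m\not\equiv0$), is regular in $x$ if $f_m(1,0)\neq0$. A Puiseux series is an element $\phi(y)=\sum_i a_iy^{\alpha_i}\in\mathbb{C}\{y^{1/N}\}$ with positive rational exponents; it is real if all its coefficients are real. A Newton--Puiseux root of $f$ is a Puiseux series $\gamma$ with $f(\gamma(y),y)\equiv0$; $\mathcal V(f)$ is the set of all of them, and $\mathrm{mult}_\gamma f$ is the largest $m$ with $f=(x-\gamma(y))^m h$, $h(\gamma(y),y)\not\equiv0$. The contact order of a Puiseux series $\varphi$ with $f$ is $\rho(\varphi,f):=\max\{\mathrm{ord}(\varphi(y)-\gamma'(y))\mid \varphi\neq\gamma'\in\mathcal V(f)\}$. If $\gamma(y)=\sum c_\alpha y^\alpha$ is a Newton--Puiseux root of $f$ and $\rho=\rho(\gamma,f)$, its truncated Newton--Puiseux root is $\tilde\gamma(y):=\sum_{\alpha\le\rho}c_\alpha y^\alpha$. For $\rho>0$, the $\rho$-approximation of a Puiseux series $\phi(y)=\sum_i a_iy^{\alpha_i}$ is $\sum_{\alpha_i<\rho}a_iy^{\alpha_i}+cy^\rho$ with $c$ a generic real number. For a rational $q$, a Puiseux series $\varphi$ is a Newton--Puiseux root $\bmod\ q+$ of $h$ if there is a Newton--Puiseux root $\xi$ of $h$ with $\mathrm{ord}(\varphi(y)-\xi(y))>q$. *)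

theory Defs
  imports "HOL-Computational_Algebra.Computational_Algebra" "HOL-Computational_Algebra.Field_as_Ring"
begin

text \<open>Bivariate real polynomials f(x,y) are represented as real poly poly:
  the outer variable is x, the inner one is y, i.e. f = sum_i (coeff f i)(y) * x^i.\<close>

definition bcoeff :: "real poly poly \<Rightarrow> nat \<Rightarrow> nat \<Rightarrow> real" where
  "bcoeff f i j = coeff (coeff f i) j"

text \<open>Regular in x: f(0,0)=0 and, with m the order of f (degree of the lowest
  nonzero homogeneous part f_m), f_m(1,0) = coefficient of x^m is nonzero.\<close>
definition regular_x :: "real poly poly \<Rightarrow> bool" where
  "regular_x f \<longleftrightarrow> bcoeff f 0 0 = 0 \<and>
     (\<exists>m. bcoeff f m 0 \<noteq> 0 \<and> (\<forall>i j. i + j < m \<longrightarrow> bcoeff f i j = 0))"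

text \<open>Formal Puiseux series (complex coefficients, nonnegative rational exponents),
  represented canonically as exponent-to-coefficient maps; level N means all
  exponents lie in (1/N)N, i.e. the series lies in C[[y^(1/N)]].\<close>
type_synonym pseries = "rat \<Rightarrow> complex"

definition level :: "nat \<Rightarrow> pseries \<Rightarrow> bool" where
  "level N \<phi> \<longleftrightarrow> N > 0 \<and> (\<forall>q. \<phi> q \<noteq> 0 \<longrightarrow> (\<exists>k::nat. q = of_nat k / of_nat N))"

definition puiseux :: "pseries \<Rightarrow> bool" where
  "puiseux \<phi> \<longleftrightarrow> (\<exists>N. level N \<phi>) \<and> \<phi> 0 = 0"

definition den :: "pseries \<Rightarrow> nat" where
  "den \<phi> = (SOME N. level N \<phi>)"

definition to_fps :: "nat \<Rightarrow> pseries \<Rightarrow> complex fps" where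
  "to_fps N \<phi> = Abs_fps (\<lambda>k. \<phi> (of_nat k / of_nat N))"

definition of_fps :: "nat \<Rightarrow> complex fps \<Rightarrow> pseries" where
  "of_fps N P = (\<lambda>q. if \<exists>k::nat. q = of_nat k / of_nat N
                     then P $ (nat \<lfloor>q * of_nat N\<rfloor>) else 0)"

text \<open>The real polynomial a(y) viewed as a power series in t = y^(1/N).\<close>
definition yfps :: "nat \<Rightarrow> real poly \<Rightarrow> complex fps" where
  "yfps N a = Abs_fps (\<lambda>k. if N dvd k then complex_of_real (coeff a (k div N)) else 0)"

definition lift :: "nat \<Rightarrow> real poly poly \<Rightarrow> complex fps poly" where
  "lift N f = map_poly (yfps N) f"

text \<open>f(phi(y), y) as a Puiseux series.\<close>
definition peval :: "real poly poly \<Rightarrow> pseries \<Rightarrow> pseries" where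
  "peval f \<phi> = of_fps (den \<phi>) (poly (lift (den \<phi>) f) (to_fps (den \<phi>) \<phi>))"

definition NP_roots :: "real poly poly \<Rightarrow> pseries set" where
  "NP_roots f = {\<phi>. puiseux \<phi> \<and> peval f \<phi> = (\<lambda>_. 0)}"

definition is_real :: "pseries \<Rightarrow> bool" where
  "is_real \<phi> \<longleftrightarrow> (\<forall>q. Im (\<phi> q) = 0)"

definition pord :: "pseries \<Rightarrow> rat" where
  "pord \<phi> = (LEAST q. \<phi> q \<noteq> 0)"

definition mult_root :: "real poly poly \<Rightarrow> pseries \<Rightarrow> nat" where
  "mult_root f \<gamma> = (GREATEST m. \<exists>h. lift (den \<gamma>) f = [:- to_fps (den \<gamma>) \<gamma>, 1:] ^ m * h
                                 \<and> poly h (to_fps (den \<gamma>) \<gamma>) \<noteq> 0)"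

definition contact :: "pseries \<Rightarrow> real poly poly \<Rightarrow> rat" where
  "contact \<phi> f = Max {pord (\<lambda>q. \<phi> q - \<gamma>' q) | \<gamma>'. \<gamma>' \<in> NP_roots f \<and> \<gamma>' \<noteq> \<phi>}"

definition truncated :: "pseries \<Rightarrow> real poly poly \<Rightarrow> pseries" where
  "truncated \<gamma> f = (\<lambda>q. if q \<le> contact \<gamma> f then \<gamma> q else 0)"

definition approx :: "rat \<Rightarrow> pseries \<Rightarrow> real \<Rightarrow> pseries" where
  "approx \<rho> \<phi> c = (\<lambda>q. if q < \<rho> then \<phi> q else if q = \<rho> then complex_of_real c else 0)"

text \<open>Coefficient c_{i,e} of X^i Y^e in f(X + phi(Y), Y) (e rational exponent).\<close>
definition shift_coeff :: "real poly poly \<Rightarrow> pseries \<Rightarrow> nat \<Rightarrow> rat \<Rightarrow> complex" where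
  "shift_coeff f \<phi> i e = of_fps (den \<phi>)
      (coeff (pcompose (lift (den \<phi>) f) [:to_fps (den \<phi>) \<phi>, 1:]) i) e"

definition NP_root_mod :: "real poly poly \<Rightarrow> rat \<Rightarrow> pseries \<Rightarrow> bool" where
  "NP_root_mod h q \<phi> \<longleftrightarrow> (\<exists>\<xi>\<in>NP_roots h. \<xi> = \<phi> \<or> pord (\<lambda>y. \<phi> y - \<xi> y) > q)"

end

theory Submission
  imports Defs
begin

locale rh =
  fixes h :: "'a::idom \<Rightarrow> 'b::idom"
  assumes h_add: "h (x + y) = h x + h y"
    and h_mult: "h (x * y) = h x * h y"
    and h_one: "h 1 = 1"
begin

lemma h_zero[simp]: "h 0 = 0"
proof -
  have "h 0 + h 0 = h 0 + 0" using h_add[of 0 0] by simp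
  then show ?thesis by (rule add_left_imp_eq)
qed

lemma h_minus: "h (- x) = - h x"
  using h_add[of x "-x"] by (simp add: eq_neg_iff_add_eq_0 add.commute)

lemma h_diff: "h (x - y) = h x - h y"
  using h_add[of x "-y"] h_minus[of y] by simp

lemma h_power: "h (x ^ n) = h x ^ n"
  by (induction n) (simp_all add: h_one h_mult)

lemma h_of_nat: "h (of_nat n) = of_nat n"
  by (induction n) (simp_all add: h_one h_add)

lemma map_add: "map_poly h (p + q) = map_poly h p + map_poly h q"
  by (intro poly_eqI) (simp add: coeff_map_poly h_add)

lemma map_minus: "map_poly h (- p) = - map_poly h p"
  by (intro poly_eqI) (simp add: coeff_map_poly h_minus)

lemma map_diff: "map_poly h (p - q) = map_poly h p - map_poly h q"
  by (intro poly_eqI) (simp add: coeff_map_poly h_diff)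

lemma map_smult: "map_poly h (smult c p) = smult (h c) (map_poly h p)"
  by (rule map_poly_smult) (simp_all add: h_mult)

lemma map_pCons: "map_poly h (pCons c p) = pCons (h c) (map_poly h p)"
  by (rule map_poly_pCons) simp

lemma map_mult: "map_poly h (p * q) = map_poly h p * map_poly h q"
  by (induction p) (simp_all add: map_add map_smult map_pCons)

lemma map_one: "map_poly h 1 = 1" by (simp add: h_one map_poly_1)

lemma map_power: "map_poly h (p ^ n) = map_poly h p ^ n"
  by (induction n) (simp_all add: map_mult h_one)

lemma map_const: "map_poly h [:c:] = [:h c:]" by (simp add: map_pCons)

lemma poly_map: "poly (map_poly h p) (h x) = h (poly p x)"
  by (induction p) (simp_all add: map_pCons h_add h_mult)

lemma map_pcompose: "map_poly h (pcompose p q) = pcompose (map_poly h p) (map_poly h q)"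
  by (induction p) (simp_all add: pcompose_pCons map_pCons map_add map_mult map_const)

lemma map_pderiv: "map_poly h (pderiv p) = pderiv (map_poly h p)"
  by (induction p) (simp_all add: pderiv_pCons map_pCons map_add)

lemma map_higher_pderiv: "map_poly h ((pderiv ^^ n) p) = (pderiv ^^ n) (map_poly h p)"
  by (induction n) (simp_all add: map_pderiv)

lemma rh_map: "rh (map_poly h)"
  by unfold_locales (simp_all add: map_add map_mult map_one)

end

lemma rh_comp: "rh h \<Longrightarrow> rh g \<Longrightarrow> rh (g \<circ> h)"
  by (simp add: rh_def)

definition ex :: "nat \<Rightarrow> 'a::comm_ring_1 fps \<Rightarrow> 'a fps" where
  "ex q P = Abs_fps (\<lambda>n. if q dvd n then P $ (n div q) else 0)"

lemma ex_nth: "ex q P $ n = (if q dvd n then P $ (n div q) else 0)"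
  by (simp add: ex_def)

lemma ex_nth_mult[simp]: "q > 0 \<Longrightarrow> ex q P $ (q * n) = P $ n"
  by (simp add: ex_nth)

lemma ex_mult:
  assumes "q > 0"
  shows "ex q (A * B) = ex q A * ex q B"
proof (rule fps_ext)
  fix n
  show "ex q (A * B) $ n = (ex q A * ex q B) $ n"
  proof (cases "q dvd n")
    case True
    then obtain m where n: "n = q * m" by blast
    have "(ex q A * ex q B) $ n = (\<Sum>i\<in>{0..n}. ex q A $ i * ex q B $ (n - i))"
      by (simp add: fps_mult_nth)
    also have "\<dots> = (\<Sum>i\<in>(\<lambda>j. q*j) ` {0..m}. ex q A $ i * ex q B $ (n - i))"
    proof (rule sum.mono_neutral_right)
      show "finite {0..n}" by simp
      show "(\<lambda>j. q*j) ` {0..m} \<subseteq> {0..n}" using n by auto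
      show "\<forall>i\<in>{0..n} - (\<lambda>j. q*j) ` {0..m}. ex q A $ i * ex q B $ (n - i) = 0"
      proof
        fix i assume i: "i \<in> {0..n} - (\<lambda>j. q*j) ` {0..m}"
        have "\<not> q dvd i"
        proof
          assume "q dvd i"
          then obtain j where j: "i = q * j" by blast
          with i n assms have "j \<le> m" by auto
          with i j show False by auto
        qed
        then show "ex q A $ i * ex q B $ (n - i) = 0" by (simp add: ex_nth)
      qed
    qed
    also have "\<dots> = (\<Sum>j\<in>{0..m}. ex q A $ (q*j) * ex q B $ (n - q*j))"
      by (rule sum.reindex_cong[where l="\<lambda>j. q*j"]) (use assms in \<open>auto simp: inj_on_def\<close>)
    also have "\<dots> = (\<Sum>j\<in>{0..m}. A $ j * B $ (m - j))"
    proof (rule sum.cong)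
      fix j assume "j \<in> {0..m}"
      have "n - q*j = q * (m - j)" using n by (simp add: diff_mult_distrib2)
      then show "ex q A $ (q*j) * ex q B $ (n - q*j) = A $ j * B $ (m - j)"
        using assms by simp
    qed simp
    also have "\<dots> = ex q (A * B) $ n" using n assms by (simp add: fps_mult_nth)
    finally show ?thesis ..
  next
    case False
    have "(ex q A * ex q B) $ n = (\<Sum>i\<in>{0..n}. ex q A $ i * ex q B $ (n - i))"
      by (simp add: fps_mult_nth)
    also have "\<dots> = 0"
    proof (rule sum.neutral, rule ballI)
      fix i assume i: "i \<in> {0..n}"
      show "ex q A $ i * ex q B $ (n - i) = 0"
      proof (cases "q dvd i \<and> q dvd (n - i)")
        case True
        then have "q dvd (i + (n - i))" by (intro dvd_add) auto
        with i False show ?thesis by simp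
      next
        case False
        then show ?thesis by (auto simp: ex_nth)
      qed
    qed
    finally show ?thesis using False by (simp add: ex_nth)
  qed
qed

lemma rh_ex: "q > 0 \<Longrightarrow> rh (ex q)"
  by unfold_locales (auto simp: ex_mult fps_eq_iff ex_nth elim!: dvdE)

lemma ex_1[simp]: "ex 1 P = P"
  by (simp add: fps_eq_iff ex_nth)

lemma ex_ex: "q > 0 \<Longrightarrow> q' > 0 \<Longrightarrow> ex q' (ex q P) = ex (q * q') P"
  apply (simp add: fps_eq_iff ex_nth)
  apply (auto elim!: dvdE simp: mult.commute mult.left_commute)
  done

lemma ex_X_power: "q > 0 \<Longrightarrow> ex q (fps_X ^ k) = fps_X ^ (k * q)"
  by (auto simp: fps_eq_iff ex_nth elim!: dvdE)

lemma ex_const: "q > 0 \<Longrightarrow> ex q (fps_const c) = fps_const c"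
  by (auto simp: fps_eq_iff ex_nth elim!: dvdE)

lemma ex_eq_0_iff: "q > 0 \<Longrightarrow> ex q A = 0 \<longleftrightarrow> A = 0"
  by (auto simp: fps_eq_iff ex_nth) (metis ex_nth_mult ex_nth)

lemma ex_0_nth[simp]: "ex q A $ 0 = A $ 0"
  by (simp add: ex_nth)

definition red :: "'a::comm_ring_1 fps \<Rightarrow> 'a" where "red x = x $ 0"

lemma rh_red: "rh red"
  by unfold_locales (simp_all add: red_def)

definition cj :: "complex fps \<Rightarrow> complex fps" where "cj P = Abs_fps (\<lambda>n. cnj (P $ n))"

lemma rh_cj: "rh cj"
  by unfold_locales (simp_all add: cj_def fps_eq_iff fps_mult_nth cnj_sum)

lemma rh_fps_of_poly: "rh fps_of_poly"
  by unfold_locales (simp_all add: fps_of_poly_add fps_of_poly_mult)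

lemma rh_of_real: "rh (of_real :: real \<Rightarrow> complex)"
  by unfold_locales simp_all

lemma yfps_eq: "N > 0 \<Longrightarrow> yfps N = ex N \<circ> fps_of_poly \<circ> map_poly of_real"
  by (auto simp: fun_eq_iff fps_eq_iff yfps_def ex_nth coeff_map_poly)

lemma rh_yfps: "N > 0 \<Longrightarrow> rh (yfps N)"
  unfolding yfps_eq
  by (intro rh_comp rh_ex rh.rh_map rh_of_real rh_fps_of_poly) auto

lemma level_pos: "level N \<phi> \<Longrightarrow> N > 0" by (simp add: level_def)

lemma level_mult:
  assumes "level N \<phi>" "k > 0" shows "level (N * k) \<phi>"
  unfolding level_def
proof (intro conjI allI impI)
  show "N * k > 0" using assms by (simp add: level_def)
  fix q assume "\<phi> q \<noteq> 0"
  then obtain j :: nat where j: "q = of_nat j / of_nat N" using assms by (auto simp: level_def)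
  have "q = of_nat (j * k) / of_nat (N * k)" using j assms by (simp add: level_def)
  then show "\<exists>k'::nat. q = of_nat k' / of_nat (N * k)" by blast
qed

lemma level_dvd:
  assumes "level N \<phi>" "N dvd M" "M > 0" shows "level M \<phi>"
proof -
  obtain k where M: "M = N * k" using assms by blast
  then have "k > 0" using assms by (auto)
  then show ?thesis using level_mult[OF assms(1)] M by simp
qed

lemma level_diff: "level N \<phi> \<Longrightarrow> level N \<psi> \<Longrightarrow> level N (\<lambda>q. \<phi> q - \<psi> q)"
  unfolding level_def by (metis diff_zero right_minus_eq)

lemma level_den: "level N \<phi> \<Longrightarrow> level (den \<phi>) \<phi>"
  unfolding den_def by (rule someI)

lemma puiseux_level: "puiseux \<phi> \<Longrightarrow> level (den \<phi>) \<phi>"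
  unfolding puiseux_def using level_den by blast

lemma rat_frac_eq:
  assumes "N > 0" "k > 0" "(of_nat n :: rat) / of_nat (N * k) = of_nat j / of_nat N"
  shows "n = j * k"
proof -
  have "(of_nat n :: rat) = of_nat j * of_nat k" using assms by (simp add: field_simps)
  then have "(of_nat n :: rat) = of_nat (j * k)" by simp
  then show ?thesis by (simp only: of_nat_eq_iff)
qed

lemma to_fps_ex:
  assumes "level N \<phi>" "k > 0"
  shows "to_fps (N * k) \<phi> = ex k (to_fps N \<phi>)"
proof (rule fps_ext)
  fix n
  have N: "N > 0" using assms by (simp add: level_def)
  show "to_fps (N * k) \<phi> $ n = ex k (to_fps N \<phi>) $ n"
  proof (cases "k dvd n")
    case True
    then obtain j where n: "n = k * j" by blast
    have "(of_nat n :: rat) / of_nat (N * k) = of_nat j / of_nat N"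
      using n N assms by (simp add: field_simps)
    then show ?thesis using n assms by (simp add: to_fps_def ex_nth)
  next
    case False
    have "\<phi> (of_nat n / of_nat (N * k)) = 0"
    proof (rule ccontr)
      assume "\<phi> (of_nat n / of_nat (N * k)) \<noteq> 0"
      then obtain j :: nat where "of_nat n / of_nat (N * k) = (of_nat j / of_nat N :: rat)"
        using assms by (auto simp: level_def)
      then have "n = j * k" using rat_frac_eq N assms by blast
      with False show False by simp
    qed
    then show ?thesis using False by (simp add: to_fps_def ex_nth)
  qed
qed

lemma of_fps_nth: "N > 0 \<Longrightarrow> of_fps N P (of_nat n / of_nat N) = P $ n"
  by (auto simp: of_fps_def)

lemma of_fps_other: "(\<forall>n::nat. q \<noteq> of_nat n / of_nat N) \<Longrightarrow> of_fps N P q = 0"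
  by (auto simp: of_fps_def)

lemma of_fps_cases:
  assumes "N > 0"
  shows "of_fps N P q = 0 \<or> (\<exists>n. q = of_nat n / of_nat N \<and> of_fps N P q = P $ n)"
  using assms by (cases "\<exists>n::nat. q = of_nat n / of_nat N") (auto simp: of_fps_nth of_fps_other)

lemma level_of_fps: "N > 0 \<Longrightarrow> level N (of_fps N P)"
  unfolding level_def using of_fps_cases by metis

lemma to_fps_of_fps: "N > 0 \<Longrightarrow> to_fps N (of_fps N P) = P"
  by (simp add: to_fps_def of_fps_nth fps_eq_iff)

lemma of_fps_to_fps:
  assumes "level N \<phi>" shows "of_fps N (to_fps N \<phi>) = \<phi>"
proof
  fix q
  have N: "N > 0" using assms level_pos by blast
  show "of_fps N (to_fps N \<phi>) q = \<phi> q"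
  proof (cases "\<exists>n::nat. q = of_nat n / of_nat N")
    case True
    then show ?thesis using N by (auto simp: of_fps_nth to_fps_def)
  next
    case False
    then show ?thesis using assms by (auto simp: of_fps_other level_def)
  qed
qed

lemma of_fps_inj: "N > 0 \<Longrightarrow> of_fps N P = of_fps N Q \<Longrightarrow> P = Q"
  by (metis to_fps_of_fps)

lemma of_fps_0: "of_fps N 0 = (\<lambda>_. 0)"
  by (auto simp: of_fps_def)

lemma of_fps_eq_0: "N > 0 \<Longrightarrow> of_fps N P = (\<lambda>_. 0) \<longleftrightarrow> P = 0"
  using of_fps_inj[of N P 0] of_fps_0[of N] by auto

lemma of_fps_ex:
  assumes N: "N > 0" and k: "k > 0"
  shows "of_fps (N * k) (ex k P) = of_fps N P"
proof
  fix q
  show "of_fps (N * k) (ex k P) q = of_fps N P q"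
  proof (cases "\<exists>n::nat. q = of_nat n / of_nat (N * k)")
    case True
    then obtain n where n: "q = of_nat n / of_nat (N * k)" by blast
    show ?thesis
    proof (cases "k dvd n")
      case True
      then obtain j where j: "n = k * j" by blast
      have qj: "q = of_nat j / of_nat N" using n j N k by (simp add: field_simps)
      have "of_fps (N*k) (ex k P) q = ex k P $ n" unfolding n by (rule of_fps_nth) (use N k in simp)
      also have "\<dots> = P $ j" using j k by simp
      also have "\<dots> = of_fps N P q" unfolding qj by (rule of_fps_nth[symmetric]) (use N in simp)
      finally show ?thesis .
    next
      case False
      have nq: "\<forall>j::nat. q \<noteq> of_nat j / of_nat N"
      proof (intro allI notI)
        fix j assume "q = of_nat j / of_nat N"
        then have "n = j * k" using rat_frac_eq[OF N k] n by simp
        then show False using False by simp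
      qed
      have "of_fps (N*k) (ex k P) q = ex k P $ n" unfolding n by (rule of_fps_nth) (use N k in simp)
      also have "\<dots> = 0" using False by (simp add: ex_nth)
      also have "0 = of_fps N P q" using nq by (simp add: of_fps_other)
      finally show ?thesis .
    qed
  next
    case False
    have "\<forall>j::nat. q \<noteq> of_nat j / of_nat N"
    proof (intro allI notI)
      fix j assume "q = of_nat j / of_nat N"
      then have "q = of_nat (j * k) / of_nat (N * k)" using N k by (simp add: field_simps)
      then show False using False by blast
    qed
    then show ?thesis using False by (simp add: of_fps_other)
  qed
qed

lemma level_inv:
  assumes E: "\<And>N k. level N \<phi> \<Longrightarrow> k > 0 \<Longrightarrow> E (N * k) = ex k (E N)"
    and N: "level N \<phi>" and M: "level M \<phi>"
  shows "of_fps N (E N) = of_fps M (E M)"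
proof -
  have N0: "N > 0" and M0: "M > 0" using N M level_pos by blast+
  have "of_fps N (E N) = of_fps (N * M) (ex M (E N))" by (rule of_fps_ex[OF N0 M0, symmetric])
  also have "\<dots> = of_fps (N * M) (E (N * M))" using E[OF N M0] by simp
  also have "\<dots> = of_fps (M * N) (E (M * N))" by (simp add: mult.commute)
  also have "\<dots> = of_fps (M * N) (ex N (E M))" using E[OF M N0] by simp
  also have "\<dots> = of_fps M (E M)" by (rule of_fps_ex[OF M0 N0])
  finally show ?thesis .
qed

lemma yfps_ex:
  assumes "N > 0" "k > 0"
  shows "yfps (N * k) a = ex k (yfps N a)"
proof (rule fps_ext)
  fix n
  show "yfps (N * k) a $ n = ex k (yfps N a) $ n"
  proof (cases "k dvd n")
    case True
    then obtain j where j: "n = k * j" by blast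
    have d1: "N * k dvd n \<longleftrightarrow> N dvd j" using assms unfolding j by (simp add: mult.commute[of N k])
    have d2: "n div (N * k) = j div N" using assms unfolding j by (simp add: mult.commute[of N k])
    have l: "yfps (N*k) a $ n = (if N*k dvd n then of_real (coeff a (n div (N*k))) else 0)"
      by (simp add: yfps_def)
    have r: "ex k (yfps N a) $ n = yfps N a $ j" unfolding j by (rule ex_nth_mult[OF assms(2)])
    have r2: "yfps N a $ j = (if N dvd j then of_real (coeff a (j div N)) else 0)"
      by (simp add: yfps_def)
    show ?thesis unfolding l r r2 d1 d2 ..
  next
    case False
    have "\<not> N * k dvd n"
    proof
      assume "N * k dvd n"
      then have "k dvd n" by (rule dvd_trans[OF dvd_triv_right[of k N]])
      with False show False by simp
    qed
    then show ?thesis using False by (simp add: yfps_def ex_nth)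
  qed
qed

lemma ex_0[simp]: "ex k 0 = 0" by (simp add: ex_def fps_eq_iff)
lemma yfps_0[simp]: "yfps N 0 = 0" by (simp add: yfps_def fps_eq_iff)

lemma lift_ex:
  assumes "N > 0" "k > 0"
  shows "lift (N * k) f = map_poly (ex k) (lift N f)"
proof -
  have "lift (N*k) f = map_poly (ex k \<circ> yfps N) f" unfolding lift_def
    by (rule map_poly_cong) (simp add: yfps_ex assms)
  then show ?thesis unfolding lift_def by (simp add: map_poly_map_poly)
qed

lemma peval_any:
  assumes "level N \<phi>"
  shows "peval f \<phi> = of_fps N (poly (lift N f) (to_fps N \<phi>))"
proof -
  have "of_fps (den \<phi>) (poly (lift (den \<phi>) f) (to_fps (den \<phi>) \<phi>))
      = of_fps N (poly (lift N f) (to_fps N \<phi>))"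
  proof (rule level_inv[where \<phi> = \<phi>])
    fix N k assume L: "level N \<phi>" and k: "(k::nat) > 0"
    interpret rh "ex k" using rh_ex k .
    show "poly (lift (N * k) f) (to_fps (N * k) \<phi>) = ex k (poly (lift N f) (to_fps N \<phi>))"
      using L k level_pos[OF L] by (simp add: lift_ex to_fps_ex poly_map)
  qed (use level_den[OF assms] assms in auto)
  then show ?thesis by (simp add: peval_def)
qed

lemma shift_coeff_any:
  assumes "level N \<phi>"
  shows "shift_coeff f \<phi> i = of_fps N (coeff (pcompose (lift N f) [:to_fps N \<phi>, 1:]) i)"
proof -
  have "of_fps (den \<phi>) (coeff (pcompose (lift (den \<phi>) f) [:to_fps (den \<phi>) \<phi>, 1:]) i)
      = of_fps N (coeff (pcompose (lift N f) [:to_fps N \<phi>, 1:]) i)"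
  proof (rule level_inv[where \<phi> = \<phi>])
    fix N k assume L: "level N \<phi>" and k: "(k::nat) > 0"
    interpret rh "ex k" using rh_ex k .
    show "coeff (pcompose (lift (N * k) f) [:to_fps (N * k) \<phi>, 1:]) i
        = ex k (coeff (pcompose (lift N f) [:to_fps N \<phi>, 1:]) i)"
    proof -
      have e: "[:ex k (to_fps N \<phi>), 1:] = map_poly (ex k) [:to_fps N \<phi>, 1:]"
        by (simp add: map_pCons h_one)
      have "coeff (pcompose (lift (N * k) f) [:to_fps (N * k) \<phi>, 1:]) i
          = coeff (pcompose (map_poly (ex k) (lift N f)) (map_poly (ex k) [:to_fps N \<phi>, 1:])) i"
        using L k level_pos[OF L] e by (simp add: lift_ex to_fps_ex)
      also have "\<dots> = coeff (map_poly (ex k) (pcompose (lift N f) [:to_fps N \<phi>, 1:])) i"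
        by (simp add: map_pcompose)
      finally show ?thesis by (simp add: coeff_map_poly)
    qed
  qed (use level_den[OF assms] assms in auto)
  then show ?thesis by (simp add: shift_coeff_def fun_eq_iff)
qed

lemma NP_roots_iff:
  assumes "level N \<phi>" "\<phi> 0 = 0"
  shows "\<phi> \<in> NP_roots f \<longleftrightarrow> poly (lift N f) (to_fps N \<phi>) = 0"
  using assms peval_any[OF assms(1)] of_fps_eq_0[OF level_pos[OF assms(1)]]
  by (auto simp: NP_roots_def puiseux_def)

lemma yfps_nz: "N > 0 \<Longrightarrow> a \<noteq> 0 \<Longrightarrow> yfps N a \<noteq> 0"
proof -
  assume N: "N > 0" and a: "a \<noteq> 0"
  then obtain n where "coeff a n \<noteq> 0" by (meson leading_coeff_0_iff)
  then have "yfps N a $ (N * n) \<noteq> 0" using N by (simp add: yfps_def)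
  then show ?thesis by auto
qed

lemma lift_nz: "N > 0 \<Longrightarrow> f \<noteq> 0 \<Longrightarrow> lift N f \<noteq> 0"
  unfolding lift_def
  by (subst map_poly_eq_0_iff) (auto simp: yfps_nz)

lemma degree_lift: "N > 0 \<Longrightarrow> degree (lift N f) = degree f"
  unfolding lift_def by (rule degree_map_poly) (simp add: yfps_nz)

lemma order_of_decomp:
  fixes p :: "'a::idom poly"
  assumes "p = [:-a, 1:] ^ m * q" "poly q a \<noteq> 0"
  shows "order a p = m"
proof -
  have q: "q \<noteq> 0" using assms by auto
  have "p \<noteq> 0" using assms q by auto
  then show ?thesis using assms
    by (simp add: order_mult order_power_n_n order_0I)
qed

lemma order_map:
  fixes p :: "'a::idom poly"
  assumes "rh h" "\<And>x. h x = 0 \<Longrightarrow> x = 0" "p \<noteq> 0"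
  shows "order (h a) (map_poly h p) = order a p"
proof -
  interpret rh h by fact
  obtain q where q: "p = [:- a, 1:] ^ order a p * q" "\<not> [:- a, 1:] dvd q"
    using order_decomp[OF assms(3)] by blast
  have nq: "poly q a \<noteq> 0" using q(2) by (simp add: poly_eq_0_iff_dvd)
  have "map_poly h p = [:- h a, 1:] ^ order a p * map_poly h q"
    by (subst q(1)) (simp add: map_mult map_power map_pCons h_minus h_one)
  moreover have "poly (map_poly h q) (h a) \<noteq> 0" using nq assms(2) poly_map by metis
  ultimately show ?thesis by (rule order_of_decomp)
qed

lemma mult_root_den:
  assumes "f \<noteq> 0" "puiseux \<gamma>"
  shows "mult_root f \<gamma> = order (to_fps (den \<gamma>) \<gamma>) (lift (den \<gamma>) f)"
proof -
  let ?P = "lift (den \<gamma>) f" and ?G = "to_fps (den \<gamma>) \<gamma>"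
  have P: "?P \<noteq> 0" using lift_nz assms puiseux_level level_pos by blast
  obtain q where q: "?P = [:- ?G, 1:] ^ order ?G ?P * q" "\<not> [:- ?G, 1:] dvd q"
    using order_decomp[OF P] by blast
  have nq: "poly q ?G \<noteq> 0" using q(2) by (simp add: poly_eq_0_iff_dvd)
  show ?thesis unfolding mult_root_def
  proof (rule Greatest_equality)
    show "\<exists>h. ?P = [:- ?G, 1:] ^ order ?G ?P * h \<and> poly h ?G \<noteq> 0" using q nq by blast
    fix m assume "\<exists>h. ?P = [:- ?G, 1:] ^ m * h \<and> poly h ?G \<noteq> 0"
    then show "m \<le> order ?G ?P" using order_of_decomp by (metis order.refl)
  qed
qed

lemma mult_root_any:
  assumes "f \<noteq> 0" "puiseux \<gamma>" "level N \<gamma>"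
  shows "mult_root f \<gamma> = order (to_fps N \<gamma>) (lift N f)"
proof -
  let ?M = "den \<gamma>"
  have LM: "level ?M \<gamma>" using assms puiseux_level by blast
  have M0: "?M > 0" and N0: "N > 0" using LM assms level_pos by blast+
  have key: "order (to_fps (K * k) \<gamma>) (lift (K * k) f) = order (to_fps K \<gamma>) (lift K f)"
    if L: "level K \<gamma>" and k: "k > 0" for K k
  proof -
    have K0: "K > 0" using L level_pos by blast
    have "order (to_fps (K * k) \<gamma>) (lift (K * k) f)
        = order (ex k (to_fps K \<gamma>)) (map_poly (ex k) (lift K f))"
      using L k K0 by (simp add: to_fps_ex lift_ex)
    also have "\<dots> = order (to_fps K \<gamma>) (lift K f)"
      by (rule order_map) (use rh_ex k ex_eq_0_iff lift_nz K0 assms(1) in auto)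
    finally show ?thesis .
  qed
  have "order (to_fps ?M \<gamma>) (lift ?M f) = order (to_fps (?M * N) \<gamma>) (lift (?M * N) f)"
    using key[OF LM N0] by simp
  also have "\<dots> = order (to_fps (N * ?M) \<gamma>) (lift (N * ?M) f)" by (simp add: mult.commute)
  also have "\<dots> = order (to_fps N \<gamma>) (lift N f)" using key[OF assms(3) M0] by simp
  finally show ?thesis using mult_root_den[OF assms(1,2)] by simp
qed

lemma pord_char:
  assumes "level N \<phi>" "\<phi> \<noteq> (\<lambda>_. 0)"
  shows "pord \<phi> = of_nat (subdegree (to_fps N \<phi>)) / of_nat N"
    and "\<phi> (of_nat (subdegree (to_fps N \<phi>)) / of_nat N) \<noteq> 0"
proof -
  have N: "N > 0" using assms level_pos by blast
  let ?s = "subdegree (to_fps N \<phi>)"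
  have nz: "to_fps N \<phi> \<noteq> 0"
    using assms of_fps_to_fps[OF assms(1)] by (metis of_fps_0)
  show nzs: "\<phi> (of_nat ?s / of_nat N) \<noteq> 0"
    using nth_subdegree_nonzero[OF nz] by (simp add: to_fps_def)
  show "pord \<phi> = of_nat ?s / of_nat N"
    unfolding pord_def
  proof (rule Least_equality)
    show "\<phi> (of_nat ?s / of_nat N) \<noteq> 0" by (fact nzs)
    fix q assume q: "\<phi> q \<noteq> 0"
    then obtain j :: nat where j: "q = of_nat j / of_nat N" using assms by (auto simp: level_def)
    then have "to_fps N \<phi> $ j \<noteq> 0" using q by (simp add: to_fps_def)
    then have "?s \<le> j" by (rule subdegree_leI)
    then show "of_nat ?s / of_nat N \<le> q" using j N by (simp add: divide_right_mono)
  qed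
qed

lemma pord_le:
  assumes "level N \<phi>" "\<phi> q \<noteq> 0"
  shows "pord \<phi> \<le> q"
proof -
  have nz: "\<phi> \<noteq> (\<lambda>_. 0)" using assms by auto
  have N: "N > 0" using assms level_pos by blast
  obtain j :: nat where j: "q = of_nat j / of_nat N" using assms by (auto simp: level_def)
  then have "to_fps N \<phi> $ j \<noteq> 0" using assms by (simp add: to_fps_def)
  then have "subdegree (to_fps N \<phi>) \<le> j" by (rule subdegree_leI)
  then show ?thesis using pord_char(1)[OF assms(1) nz] j N by (simp add: divide_right_mono)
qed

lemma pord_gt:
  assumes "level N \<phi>" "\<phi> \<noteq> (\<lambda>_. 0)" "\<And>q. q \<le> r \<Longrightarrow> \<phi> q = 0"
  shows "r < pord \<phi>"
  using pord_char[OF assms(1,2)] assms(3) by (metis not_le)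

lemma pord_of_fps:
  assumes "N > 0" "P \<noteq> 0"
  shows "pord (of_fps N P) = of_nat (subdegree P) / of_nat N"
  using pord_char(1)[OF level_of_fps[OF assms(1)]] assms of_fps_eq_0 to_fps_of_fps by metis

lemma NP_finite:
  assumes "f \<noteq> 0"
  shows "finite (NP_roots f)"
proof (rule ccontr)
  assume "infinite (NP_roots f)"
  then obtain A where A: "finite A" "card A = Suc (degree f)" "A \<subseteq> NP_roots f"
    using infinite_arbitrarily_large by blast
  define L where "L = (\<Prod>\<phi>\<in>A. den \<phi>)"
  have den0: "den \<phi> > 0" if "\<phi> \<in> A" for \<phi>
    using that A(3) puiseux_level level_pos by (auto simp: NP_roots_def)
  have L0: "L > 0" unfolding L_def using den0 A(1) by (simp add: prod_pos)
  have lev: "level L \<phi>" if "\<phi> \<in> A" for \<phi>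
  proof (rule level_dvd)
    show "level (den \<phi>) \<phi>" using that A(3) puiseux_level by (auto simp: NP_roots_def)
    show "den \<phi> dvd L" unfolding L_def by (rule dvd_prodI) (use that A(1) in auto)
  qed (fact L0)
  have inj: "inj_on (to_fps L) A"
    by (rule inj_onI) (metis of_fps_to_fps lev)
  have sub: "to_fps L ` A \<subseteq> {x. poly (lift L f) x = 0}"
  proof
    fix x assume "x \<in> to_fps L ` A"
    then obtain \<phi> where \<phi>: "\<phi> \<in> A" "x = to_fps L \<phi>" by blast
    then have r: "\<phi> \<in> NP_roots f" and z: "\<phi> 0 = 0" using A(3) by (auto simp: NP_roots_def puiseux_def)
    show "x \<in> {x. poly (lift L f) x = 0}" using NP_roots_iff[OF lev[OF \<phi>(1)] z] r \<phi>(2) by simp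
  qed
  have "card A = card (to_fps L ` A)" using inj by (simp add: card_image)
  also have "\<dots> \<le> card {x. poly (lift L f) x = 0}"
    by (rule card_mono[OF poly_roots_finite[OF lift_nz[OF L0 assms]] sub])
  also have "\<dots> \<le> degree (lift L f)" by (rule card_poly_roots_bound[OF lift_nz[OF L0 assms]])
  also have "\<dots> = degree f" using degree_lift L0 by blast
  finally show False using A(2) by simp
qed

abbreviation rp :: "complex fps poly \<Rightarrow> complex poly" where "rp G \<equiv> map_poly red G"

lemma red_0[simp]: "red 0 = 0" by (simp add: red_def)
lemma red_1[simp]: "red 1 = 1" by (simp add: red_def)

lemma poly_rp: "red (poly G x) = poly (rp G) (x $ 0)"
proof -
  interpret rh "red :: complex fps \<Rightarrow> complex" by (rule rh_red)
  show ?thesis using poly_map[of G x] by (simp add: red_def)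
qed

lemma poly_taylor1:
  fixes p :: "'a::idom poly"
  shows "\<exists>R. poly p (x + h) = poly p x + h * poly (pderiv p) x + h^2 * R"
proof (induction p)
  case 0
  then show ?case by simp
next
  case (pCons a p)
  then obtain R where R: "poly p (x + h) = poly p x + h * poly (pderiv p) x + h^2 * R" by blast
  show ?case
    by (rule exI[of _ "poly (pderiv p) x + x * R + h * R"])
       (simp only: poly_pCons R, simp add: pderiv_pCons algebra_simps power2_eq_square)
qed

lemma poly_diff_factor:
  fixes p :: "'a::comm_ring_1 poly"
  shows "\<exists>Q. poly p x - poly p y = (x - y) * Q"
proof (induction p)
  case 0
  show ?case by (rule exI[of _ 0]) simp
next
  case (pCons a p)
  then obtain Q where Q: "poly p x - poly p y = (x - y) * Q" by blast
  have "poly (pCons a p) x - poly (pCons a p) y = x * poly p x - y * poly p y" by simp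
  also have "\<dots> = (x - y) * poly p x + y * (poly p x - poly p y)" by (simp add: algebra_simps)
  also have "\<dots> = (x - y) * (poly p x + y * Q)" by (simp add: Q algebra_simps)
  finally show ?case by blast
qed

lemma fps_X_power_shift:
  fixes A :: "'a::comm_ring_1 fps"
  assumes "\<And>j. j < n \<Longrightarrow> A $ j = 0"
  shows "fps_X ^ n * fps_shift n A = A"
  using assms by (intro fps_ext) (auto simp: fps_X_power_mult_nth)

lemma poly_agree:
  fixes G :: "'a::comm_ring_1 fps poly"
  assumes "\<And>j. j \<le> n \<Longrightarrow> A $ j = B $ j"
  shows "poly G A $ n = poly G B $ n"
proof -
  obtain Q where Q: "poly G A - poly G B = (A - B) * Q" using poly_diff_factor by blast
  define S where "S = fps_shift (Suc n) (A - B)"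
  have e: "A - B = fps_X ^ Suc n * S" unfolding S_def
    by (rule fps_X_power_shift[symmetric]) (use assms in auto)
  have pe: "poly G A - poly G B = fps_X ^ Suc n * (S * Q)"
    using Q e by (metis mult.assoc)
  have "(poly G A - poly G B) $ n = 0" unfolding pe fps_X_power_mult_nth by simp
  then show ?thesis by simp
qed

lemma hensel_simple:
  fixes G :: "complex fps poly"
  assumes root: "poly (rp G) c = 0" and simple: "poly (pderiv (rp G)) c \<noteq> 0"
  shows "\<exists>r. poly G r = 0 \<and> r $ 0 = c"
proof -
  interpret R: rh "red :: complex fps \<Rightarrow> complex" by (rule rh_red)
  define d where "d = poly (pderiv (rp G)) c"
  have d: "d \<noteq> 0" using simple d_def by simp
  define step where "step = (\<lambda>r n. r - fps_const ((poly G r $ n) / d) * fps_X ^ n)"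
  define sq where "sq = rec_nat (fps_const c) (\<lambda>n r. step r (Suc n))"
  have sq0: "sq 0 = fps_const c" by (simp add: sq_def)
  have sqS: "sq (Suc n) = step (sq n) (Suc n)" for n by (simp add: sq_def)
  have stepnth: "step r (Suc n) $ i = r $ i" if "i \<le> n" for r n i
    using that by (simp add: step_def fps_X_power_mult_right_nth)
  have inv: "sq n $ 0 = c \<and> (\<forall>i\<le>n. poly G (sq n) $ i = 0)" for n
  proof (induction n)
    case 0
    have "poly G (fps_const c) $ 0 = poly (rp G) c" using poly_rp[of G "fps_const c"] by (simp add: red_def)
    then show ?case using root sq0 by simp
  next
    case (Suc n)
    define r where "r = sq n"
    define s where "s = poly G r $ Suc n / d"
    define h where "h = fps_X ^ Suc n * fps_const (- s)"
    have r': "sq (Suc n) = r + h" by (simp add: sqS r_def step_def s_def h_def algebra_simps)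
    obtain Rm where Rm: "poly G (r + h) = poly G r + h * poly (pderiv G) r + h^2 * Rm"
      using poly_taylor1 by blast
    have D0: "poly (pderiv G) r $ 0 = d"
    proof -
      have "poly (pderiv G) r $ 0 = poly (rp (pderiv G)) (r $ 0)"
        using poly_rp[of "pderiv G" r] by (simp add: red_def)
      also have "\<dots> = d" using Suc.IH by (simp add: r_def d_def R.map_pderiv)
      finally show ?thesis .
    qed
    have h2: "h^2 * Rm = fps_X ^ Suc n * (fps_X ^ Suc n * (fps_const (s*s) * Rm))"
      by (simp add: h_def power2_eq_square algebra_simps)
    have "poly G (sq (Suc n)) $ i = 0" if "i \<le> Suc n" for i
    proof -
      have "poly G (sq (Suc n)) $ i = poly G r $ i + (h * poly (pderiv G) r) $ i + (h^2 * Rm) $ i"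
        using r' Rm by simp
      also have "(h^2 * Rm) $ i = 0" using that unfolding h2 fps_X_power_mult_nth by simp
      also have "(h * poly (pderiv G) r) $ i = (if i < Suc n then 0 else - s * d)"
      proof -
        have hD: "h * poly (pderiv G) r = fps_X ^ Suc n * (fps_const (- s) * poly (pderiv G) r)"
          unfolding h_def by (rule mult.assoc)
        show ?thesis unfolding hD fps_X_power_mult_nth using that D0 by auto
      qed
      finally show ?thesis
        using Suc.IH that d by (cases "i = Suc n") (auto simp: r_def s_def)
    qed
    moreover have "sq (Suc n) $ 0 = c" using Suc.IH by (simp add: sqS stepnth)
    ultimately show ?case by blast
  qed
  have agree: "sq m $ i = sq i $ i" if "i \<le> m" for i m
    using that
  proof (induction m)
    case 0 then show ?case by simp
  next
    case (Suc m)
    then show ?case by (cases "i = Suc m") (auto simp: sqS stepnth)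
  qed
  define r where "r = Abs_fps (\<lambda>n. sq n $ n)"
  have "poly G r $ n = 0" for n
  proof -
    have "poly G r $ n = poly G (sq n) $ n"
    proof (rule poly_agree)
      fix j assume "j \<le> n"
      then show "r $ j = sq n $ j" unfolding r_def using agree[of j n] by simp
    qed
    then show ?thesis using inv by simp
  qed
  then have "poly G r = 0" by (simp add: fps_eq_iff)
  moreover have "r $ 0 = c" using inv by (simp add: r_def)
  ultimately show ?thesis by blast
qed

lemma order_of_decomp_0:
  fixes p :: "'a::idom poly"
  assumes "p = [:-a, 1:] ^ m * q" "poly q a \<noteq> 0"
  shows "order a p = m"
proof -
  have q: "q \<noteq> 0" using assms by auto
  have "p \<noteq> 0" using assms q by auto
  then show ?thesis using assms
    by (simp add: order_mult order_power_n_n order_0I)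
qed

lemma ex_zero[simp]: "ex q 0 = 0" by (simp add: ex_def fps_eq_iff)

lemma ex_1_fun: "ex 1 = (\<lambda>x. x)" by (rule ext) (rule ex_1)
lemma ex_1_fun': "ex (Suc 0) = (\<lambda>x. x)" using ex_1_fun by simp

lemma pcompose_power_left: "pcompose (p ^ n) q = (pcompose p q) ^ n"
  by (induction n) (simp_all add: pcompose_mult pcompose_1)

lemma higher_pderiv_pcompose_shift:
  fixes p :: "'a::idom poly"
  shows "(pderiv ^^ j) (pcompose p [:a, 1:]) = pcompose ((pderiv ^^ j) p) [:a, 1:]"
  by (induction j) (simp_all add: pderiv_pcompose pderiv_pCons)

lemma order_shift:
  fixes p :: "'a::idom poly"
  assumes "p \<noteq> 0"
  shows "order 0 (pcompose p [:c, 1:]) = order c p"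
proof -
  obtain q where q: "p = [:- c, 1:] ^ order c p * q" "\<not> [:- c, 1:] dvd q"
    using order_decomp[OF assms] by blast
  have nq: "poly q c \<noteq> 0" using q(2) by (simp add: poly_eq_0_iff_dvd)
  have "pcompose p [:c, 1:] = [:- 0, 1:] ^ order c p * pcompose q [:c, 1:]"
    by (subst q(1)) (simp add: pcompose_mult pcompose_power_left pcompose_pCons)
  moreover have "poly (pcompose q [:c, 1:]) 0 \<noteq> 0" using nq by (simp add: poly_pcompose)
  ultimately show ?thesis by (rule order_of_decomp_0)
qed

lemma order_1_simple:
  fixes p :: "'a::field_char_0 poly"
  assumes "p \<noteq> 0" "order c p = 1"
  shows "poly p c = 0 \<and> poly (pderiv p) c \<noteq> 0"
proof -
  have r: "poly p c = 0" using assms order_root by force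
  have "degree p \<noteq> 0"
  proof
    assume "degree p = 0"
    then obtain a where "p = [:a:]" by (metis degree_eq_zeroE)
    then show False using r assms(1) by simp
  qed
  then have pd: "pderiv p \<noteq> 0" by (simp add: pderiv_eq_0_iff)
  have "order c (pderiv p) = 0" using order_pderiv[OF assms(1) r] assms(2) by simp
  then show ?thesis using r pd order_eq_0_iff by blast
qed

lemma order_iter_pderiv:
  fixes p :: "'a::field_char_0 poly"
  assumes "p \<noteq> 0" "order c p = k" "j < k"
  shows "(pderiv ^^ j) p \<noteq> 0 \<and> order c ((pderiv ^^ j) p) = k - j"
  using assms(3)
proof (induction j)
  case 0
  then show ?case using assms by simp
next
  case (Suc j)
  let ?q = "(pderiv ^^ j) p"
  have q: "?q \<noteq> 0" "order c ?q = k - j" using Suc by auto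
  have r: "poly ?q c = 0" using q Suc.prems order_root by force
  have o: "order c ?q = Suc (order c (pderiv ?q))" using order_pderiv[OF q(1) r] .
  have "degree ?q \<ge> 1" using order_degree[OF q(1), of c] q(2) Suc.prems by simp
  then have "pderiv ?q \<noteq> 0" by (simp add: pderiv_eq_0_iff)
  then show ?case using o q(2) by simp
qed

lemma low_coeffs:
  fixes p :: "'a::idom poly"
  assumes "p \<noteq> 0" "order 0 p = k"
  shows "(\<forall>i<k. coeff p i = 0) \<and> coeff p k \<noteq> 0"
proof -
  have "monom 1 k dvd p" using monom_1_dvd_iff[OF assms(1)] assms(2) by simp
  then have a: "\<forall>i<k. coeff p i = 0" using monom_1_dvd_iff' by blast
  have "\<not> monom 1 (Suc k) dvd p" using monom_1_dvd_iff[OF assms(1)] assms(2) by simp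
  then have "\<not> (\<forall>i<Suc k. coeff p i = 0)" using monom_1_dvd_iff' by blast
  then have "coeff p k \<noteq> 0" using a less_Suc_eq by blast
  with a show ?thesis by blast
qed

lemma puiseux_exist:
  fixes G :: "complex fps poly"
  assumes "rp G \<noteq> 0" "order c (rp G) = k" "k \<ge> 1"
  shows "\<exists>q r. q > 0 \<and> poly (map_poly (ex q) G) r = 0 \<and> r $ 0 = c"
  using assms
proof (induction k arbitrary: G c rule: less_induct)
  case (less k G c)
  interpret R: rh "red :: complex fps \<Rightarrow> complex" by (rule rh_red)
  let ?p = "rp G"
  show ?case
  proof (cases "k = 1")
    case True
    then have "poly ?p c = 0 \<and> poly (pderiv ?p) c \<noteq> 0" using order_1_simple less by auto
    then obtain r where "poly G r = 0" "r $ 0 = c" using hensel_simple by blast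
    then show ?thesis by - (rule exI[of _ 1], rule exI[of _ r], simp add: ex_1_fun')
  next
    case False
    then have k2: "k \<ge> 2" using less by auto
    define D where "D = (pderiv ^^ (k-1)) G"
    have rD: "rp D = (pderiv ^^ (k-1)) ?p" by (simp add: D_def R.map_higher_pderiv)
    have "rp D \<noteq> 0 \<and> order c (rp D) = 1"
      using order_iter_pderiv[of ?p c k "k-1"] less k2 rD by auto
    then obtain \<zeta> where \<zeta>: "poly D \<zeta> = 0" "\<zeta> $ 0 = c"
      using order_1_simple hensel_simple by metis
    define G2 where "G2 = pcompose G [:\<zeta>, 1:]"
    define g where "g = coeff G2"
    have gk1: "g (k-1) = 0"
    proof -
      have "coeff ((pderiv ^^ (k-1)) G2) 0 = pochhammer 1 (k-1) * g (k-1)"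
        using coeff_higher_pderiv[of "k-1" G2 0] by (simp add: g_def)
      moreover have "coeff ((pderiv ^^ (k-1)) G2) 0 = poly D \<zeta>"
        by (simp add: G2_def higher_pderiv_pcompose_shift D_def poly_0_coeff_0[symmetric] poly_pcompose)
      ultimately have "pochhammer 1 (k-1) * g (k-1) = 0" using \<zeta> by simp
      moreover have "pochhammer (1::complex fps) (k-1) \<noteq> 0"
        by (simp add: pochhammer_fact[symmetric])
      ultimately show ?thesis by simp
    qed
    have redz: "red \<zeta> = c" using \<zeta> by (simp add: red_def)
    have rG2: "rp G2 = pcompose ?p [:c, 1:]"
      by (simp add: G2_def R.map_pcompose R.map_pCons redz)
    have rG2nz: "rp G2 \<noteq> 0" using rG2 less(2) by (simp add: pcompose_eq_0_iff)
    have ord2: "order 0 (rp G2) = k" using rG2 order_shift[OF less(2), of c] less(3) by simp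
    have cr: "coeff (rp G2) i = g i $ 0" for i by (simp add: coeff_map_poly g_def red_def)
    have gi0: "g i $ 0 = 0" if "i < k" for i using low_coeffs[OF rG2nz ord2] that cr by simp
    have gk: "g k $ 0 \<noteq> 0" using low_coeffs[OF rG2nz ord2] cr by simp
    show ?thesis
    proof (cases "g 0 = 0")
      case True
      have "poly G \<zeta> = poly G2 0" by (simp add: G2_def poly_pcompose)
      also have "\<dots> = 0" using True by (simp add: poly_0_coeff_0 g_def)
      finally show ?thesis using \<zeta> by - (rule exI[of _ 1], rule exI[of _ \<zeta>], simp add: ex_1_fun')
    next
      case False
      define I where "I = {i. i < k \<and> g i \<noteq> 0}"
      have I: "finite I" "0 \<in> I" using False k2 by (auto simp: I_def)
      define F where "F = (\<lambda>i. (of_nat (subdegree (g i)) :: rat) / of_nat (k - i))"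
      obtain i0 where i0: "i0 \<in> I" "\<And>i. i \<in> I \<Longrightarrow> F i0 \<le> F i"
      proof -
        have "Min (F ` I) \<in> F ` I" using I by (intro Min_in) auto
        then obtain i0 where "i0 \<in> I" "F i0 = Min (F ` I)" by auto
        moreover have "\<And>i. i \<in> I \<Longrightarrow> Min (F ` I) \<le> F i" using I by auto
        ultimately show ?thesis using that by metis
      qed
      define pp where "pp = subdegree (g i0)"
      define qq where "qq = k - i0"
      have i0k: "i0 < k" "g i0 \<noteq> 0" using i0 by (auto simp: I_def)
      have qq0: "qq > 0" using i0k by (simp add: qq_def)
      have pp0: "pp > 0" using gi0[OF i0k(1)] i0k(2) subdegree_eq_0_iff[of "g i0"] by (simp add: pp_def)
      have ineq: "pp * (k - i) \<le> qq * subdegree (g i)" if "i \<in> I" for i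
      proof -
        have ik: "i < k" using that by (simp add: I_def)
        have "F i0 \<le> F i" using i0(2) that .
        then have "(of_nat pp :: rat) / of_nat qq \<le> of_nat (subdegree (g i)) / of_nat (k - i)"
          by (simp add: F_def pp_def qq_def)
        then have "(of_nat pp :: rat) * of_nat (k - i) \<le> of_nat (subdegree (g i)) * of_nat qq"
          using qq0 ik by (simp add: divide_le_eq le_divide_eq field_simps)
        then have "(of_nat (pp * (k - i)) :: rat) \<le> of_nat (qq * subdegree (g i))"
          by (simp add: mult.commute)
        then show ?thesis by (simp only: of_nat_le_iff)
      qed
      define S2 where "S2 = pcompose (map_poly (ex qq) G2) [:0, fps_X ^ pp:]"
      have cS2: "coeff S2 i = fps_X ^ (pp * i) * ex qq (g i)" for i
        by (simp add: S2_def coeff_pcompose_linear coeff_map_poly g_def power_mult)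
      have low: "coeff S2 i $ j = 0" if "j < pp * k" for i j
      proof (cases "k \<le> i")
        case True
        then have "pp * k \<le> pp * i" by simp
        then have "j < pp * i" using that by linarith
        then show ?thesis by (simp add: cS2 fps_X_power_mult_nth)
      next
        case ki: False
        show ?thesis
        proof (cases "g i = 0")
          case True then show ?thesis by (simp add: cS2)
        next
          case False
          with ki have iI: "i \<in> I" by (simp add: I_def)
          show ?thesis
          proof (cases "j < pp * i")
            case True then show ?thesis by (simp add: cS2 fps_X_power_mult_nth)
          next
            case ji: False
            define t where "t = j - pp * i"
            have "pp * k = pp * i + pp * (k - i)" using ki by (simp add: diff_mult_distrib2)
            then have "t < pp * (k - i)" using that ji by (simp add: t_def)
            also have "\<dots> \<le> qq * subdegree (g i)" using ineq iI .
            finally have t: "t < qq * subdegree (g i)" .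
            have "ex qq (g i) $ t = 0"
            proof (cases "qq dvd t")
              case True
              then obtain u where u: "t = qq * u" by blast
              then have "u < subdegree (g i)" using t qq0 by simp
              then have "g i $ u = 0" by (rule nth_less_subdegree_zero)
              moreover have "ex qq (g i) $ t = g i $ u" unfolding u using qq0 by (rule ex_nth_mult)
              ultimately show ?thesis by simp
            next
              case False then show ?thesis by (simp add: ex_nth)
            qed
            then show ?thesis using ji by (simp add: cS2 fps_X_power_mult_nth t_def)
          qed
        qed
      qed
      define G3 where "G3 = map_poly (fps_shift (pp * k)) S2"
      have S2G3: "S2 = smult (fps_X ^ (pp * k)) G3"
      proof (rule poly_eqI)
        fix i
        show "coeff S2 i = coeff (smult (fps_X ^ (pp * k)) G3) i"
          using fps_X_power_shift[of "pp*k" "coeff S2 i"] low by (simp add: G3_def coeff_map_poly)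
      qed
      define Rr where "Rr = rp G3"
      have cR: "coeff Rr i = (fps_X ^ (pp * i) * ex qq (g i)) $ (pp * k)" for i
        by (simp add: Rr_def G3_def coeff_map_poly red_def cS2)
      have cRk: "coeff Rr k \<noteq> 0" using gk by (simp add: cR fps_X_power_mult_nth)
      have cRbig: "coeff Rr i = 0" if "i > k" for i
      proof -
        have "pp * k < pp * i" using that pp0 by simp
        then show ?thesis by (simp add: cR fps_X_power_mult_nth)
      qed
      have cRk1: "coeff Rr (k-1) = 0" using gk1 by (simp add: cR)
      have cRi0: "coeff Rr i0 \<noteq> 0"
      proof -
        have e: "pp * k - pp * i0 = qq * pp" using i0k by (simp add: qq_def diff_mult_distrib2 mult.commute)
        have "pp * i0 \<le> pp * k" using i0k by simp
        then have "coeff Rr i0 = ex qq (g i0) $ (qq * pp)"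
          using i0k(1) by (simp add: cR fps_X_power_mult_nth e)
        also have "\<dots> = g i0 $ pp" using qq0 by simp
        finally show ?thesis using i0k by (simp add: pp_def)
      qed
      have Rnz: "Rr \<noteq> 0" using cRk by auto
      have degR: "degree Rr = k"
      proof (rule antisym)
        show "degree Rr \<le> k" by (rule degree_le) (use cRbig in auto)
        show "k \<le> degree Rr" by (rule le_degree) (fact cRk)
      qed
      obtain c' where c': "poly Rr c' = 0"
        using alg_closed_imp_poly_has_root[of Rr] degR k2 by auto
      have ordlt: "order c' Rr < k"
      proof (rule ccontr)
        assume "\<not> order c' Rr < k"
        then have ok: "order c' Rr = k" using order_degree[OF Rnz, of c'] degR by simp
        define R1 where "R1 = (pderiv ^^ (k-1)) Rr"
        have "R1 \<noteq> 0 \<and> order c' R1 = 1"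
          using order_iter_pderiv[OF Rnz ok, of "k-1"] k2 by (simp add: R1_def)
        then have pR1: "poly R1 c' = 0" using order_1_simple by blast
        have R1eq: "R1 = [:0, pochhammer 2 (k-1) * coeff Rr k:]"
        proof (rule poly_eqI)
          fix n
          show "coeff R1 n = coeff [:0, pochhammer 2 (k-1) * coeff Rr k:] n"
          proof (cases n)
            case 0
            then show ?thesis using cRk1 by (simp add: R1_def coeff_higher_pderiv)
          next
            case (Suc m)
            show ?thesis
            proof (cases m)
              case 0
              then show ?thesis using Suc k2 by (simp add: R1_def coeff_higher_pderiv numeral_2_eq_2)
            next
              case (Suc m')
              have "n + (k - 1) > k" using Suc \<open>n = Suc m\<close> k2 by simp
              then show ?thesis using \<open>n = Suc m\<close> Suc by (simp add: R1_def coeff_higher_pderiv cRbig)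
            qed
          qed
        qed
        have "pochhammer 2 (k-1) * coeff Rr k * c' = 0" using pR1 unfolding R1eq by (simp add: mult.commute)
        moreover have "pochhammer (2::complex) (k-1) \<noteq> 0"
        proof
          assume "pochhammer (2::complex) (k-1) = 0"
          then obtain j where "(2::complex) = - of_nat j" by (auto simp: pochhammer_eq_0_iff)
          then have "(of_nat (j + 2) :: complex) = 0" by (metis add.commute add_eq_0_iff of_nat_add of_nat_numeral)
          then show False by (simp only: of_nat_eq_0_iff)
        qed
        ultimately have "c' = 0" using cRk by simp
        then have "order 0 Rr = k" using ok by simp
        then have "coeff Rr i0 = 0" using low_coeffs[OF Rnz] i0k by blast
        then show False using cRi0 by simp
      qed
      have k'1: "order c' Rr \<ge> 1" using c' Rnz order_root[of Rr c'] by simp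
      obtain q' r' where qr: "q' > 0" "poly (map_poly (ex q') G3) r' = 0" "r' $ 0 = c'"
        using less.IH[OF ordlt _ _ k'1] Rnz unfolding Rr_def by blast
      interpret E1: rh "ex q' :: complex fps \<Rightarrow> complex fps" using rh_ex qr(1) .
      interpret E2: rh "ex qq :: complex fps \<Rightarrow> complex fps" using rh_ex qq0 .
      interpret E12: rh "ex (qq * q') :: complex fps \<Rightarrow> complex fps" by (rule rh_ex) (use qq0 qr(1) in simp)
      define Gq where "Gq = map_poly (ex (qq * q')) G"
      define zq where "zq = ex (qq * q') \<zeta>"
      have exx: "ex q' \<circ> ex qq = (ex (qq * q') :: complex fps \<Rightarrow> complex fps)"
        by (rule ext) (simp add: ex_ex qq0 qr(1))
      have A: "map_poly (ex q') S2 = smult (fps_X ^ (pp * k * q')) (map_poly (ex q') G3)"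
        by (simp add: S2G3 E1.map_smult ex_X_power qr(1))
      have "map_poly (ex q') (map_poly (ex qq) G2) = map_poly (ex (qq * q')) G2"
        by (simp add: map_poly_map_poly exx)
      also have "\<dots> = pcompose Gq [:zq, 1:]"
        by (simp add: G2_def Gq_def zq_def E12.map_pcompose E12.map_pCons E12.h_one)
      finally have mm: "map_poly (ex q') (map_poly (ex qq) G2) = pcompose Gq [:zq, 1:]" .
      have B: "map_poly (ex q') S2 = pcompose (pcompose Gq [:zq, 1:]) [:0, fps_X ^ (pp * q'):]"
        unfolding S2_def E1.map_pcompose mm by (simp add: E1.map_pCons ex_X_power qr(1))
      have "poly (map_poly (ex q') S2) r' = 0" by (simp add: A qr(2))
      then have root: "poly Gq (zq + fps_X ^ (pp * q') * r') = 0"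
        unfolding B by (simp add: poly_pcompose mult.commute)
      have "(fps_X ^ (pp * q') * r') $ 0 = 0" using pp0 qr(1) by (simp add: fps_X_power_mult_nth)
      then have c0: "(zq + fps_X ^ (pp * q') * r') $ 0 = c" using \<zeta> by (simp add: zq_def)
      show ?thesis using root c0 qq0 qr(1)
        by - (rule exI[of _ "qq * q'"], rule exI[of _ "zq + fps_X ^ (pp * q') * r'"], simp add: Gq_def)
    qed
  qed
qed

definition cv :: "complex fps poly \<Rightarrow> nat" where
  "cv P = Min ((\<lambda>i. subdegree (coeff P i)) ` {i. coeff P i \<noteq> 0})"

definition nrm :: "complex fps poly \<Rightarrow> complex fps poly" where
  "nrm P = map_poly (fps_shift (cv P)) P"

lemma shift_X_power_mult: "fps_shift c (fps_X ^ c * p) = p"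
  by (intro fps_ext) (simp add: fps_X_power_mult_nth)

lemma coeff_nz_finite: "finite {i. coeff P i \<noteq> 0}"
  by (rule finite_subset[of _ "{..degree P}"]) (auto intro: le_degree)

lemma cv_nrm_unique:
  assumes P: "P = smult (fps_X ^ c) P'" and nz: "rp P' \<noteq> 0"
  shows "cv P = c \<and> nrm P = P'"
proof -
  obtain i0 where i0: "coeff (rp P') i0 \<noteq> 0" using nz by (meson leading_coeff_0_iff)
  then have i0': "coeff P' i0 $ 0 \<noteq> 0" by (simp add: coeff_map_poly red_def)
  have cP: "coeff P i = fps_X ^ c * coeff P' i" for i using P by simp
  have sd: "subdegree (coeff P i) = c + subdegree (coeff P' i)" if "coeff P i \<noteq> 0" for i
  proof -
    have "coeff P' i \<noteq> 0" using that cP by auto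
    then show ?thesis using cP by (simp add: fps_X_power_subdegree)
  qed
  let ?T = "(\<lambda>i. subdegree (coeff P i)) ` {i. coeff P i \<noteq> 0}"
  have fin: "finite ?T" by (rule finite_imageI[OF coeff_nz_finite])
  have i0P: "coeff P i0 \<noteq> 0" using cP i0' by (auto simp: fps_X_power_mult_nth)
  have "subdegree (coeff P i0) = c" using sd[OF i0P] i0' by (simp add: subdegree_eq_0)
  then have cin: "c \<in> ?T" using i0P by force
  have cle: "\<forall>t\<in>?T. c \<le> t" using sd by auto
  have cvc: "cv P = c" unfolding cv_def using fin cin cle by (intro Min_eqI) auto
  have "nrm P = P'"
    by (rule poly_eqI) (simp add: nrm_def cvc coeff_map_poly cP shift_X_power_mult)
  with cvc show ?thesis by simp
qed

lemma nrm_decomp: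
  assumes "P \<noteq> 0"
  shows "P = smult (fps_X ^ cv P) (nrm P) \<and> rp (nrm P) \<noteq> 0"
proof -
  let ?T = "(\<lambda>i. subdegree (coeff P i)) ` {i. coeff P i \<noteq> 0}"
  have fin: "finite ?T" by (rule finite_imageI[OF coeff_nz_finite])
  have ne: "?T \<noteq> {}" using assms by (auto simp: poly_eq_iff)
  have "cv P \<in> ?T" unfolding cv_def using fin ne by (rule Min_in)
  then obtain i0 where i0: "coeff P i0 \<noteq> 0" "subdegree (coeff P i0) = cv P" by auto
  have le: "cv P \<le> subdegree (coeff P i)" if "coeff P i \<noteq> 0" for i
    unfolding cv_def using fin that by (intro Min_le) auto
  have "coeff P i = fps_X ^ cv P * fps_shift (cv P) (coeff P i)" for i
  proof (cases "coeff P i = 0")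
    case True then show ?thesis by simp
  next
    case False
    show ?thesis
      by (rule fps_X_power_shift[symmetric]) (use le[OF False] in \<open>auto intro: nth_less_subdegree_zero\<close>)
  qed
  then have e: "P = smult (fps_X ^ cv P) (nrm P)"
    by (intro poly_eqI) (simp add: nrm_def coeff_map_poly)
  have "coeff (rp (nrm P)) i0 = coeff P i0 $ cv P" by (simp add: nrm_def coeff_map_poly red_def)
  also have "\<dots> \<noteq> 0" using i0 by (metis nth_subdegree_nonzero)
  finally have "rp (nrm P) \<noteq> 0" by auto
  with e show ?thesis by blast
qed

lemma regular_nz: "regular_x f \<Longrightarrow> f \<noteq> 0"
  by (auto simp: regular_x_def bcoeff_def)

lemma root_level: "\<phi> \<in> NP_roots f \<Longrightarrow> level (den \<phi>) \<phi> \<and> \<phi> 0 = 0"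
  by (auto simp: NP_roots_def puiseux_def intro: level_den)

lemma diff_level: "level N \<phi> \<Longrightarrow> level M \<psi> \<Longrightarrow> level (N * M) (\<lambda>q. \<phi> q - \<psi> q)"
  by (metis level_diff level_mult level_pos mult.commute)

lemma level_sub: "level N \<phi> \<Longrightarrow> (\<And>q. \<psi> q \<noteq> 0 \<Longrightarrow> \<phi> q \<noteq> 0) \<Longrightarrow> level N \<psi>"
  by (auto simp: level_def)

lemma contact_set_finite:
  assumes "f \<noteq> 0"
  shows "finite {pord (\<lambda>q. \<phi> q - \<gamma>' q) | \<gamma>'. \<gamma>' \<in> NP_roots f \<and> \<gamma>' \<noteq> \<phi>}"
proof -
  have "finite {\<gamma>'. \<gamma>' \<in> NP_roots f \<and> \<gamma>' \<noteq> \<phi>}" using NP_finite[OF assms] by simp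
  then show ?thesis by (rule finite_image_set)
qed

lemma contact_ge:
  assumes "f \<noteq> 0" "\<gamma>' \<in> NP_roots f" "\<gamma>' \<noteq> \<gamma>"
  shows "pord (\<lambda>q. \<gamma> q - \<gamma>' q) \<le> contact \<gamma> f"
  unfolding contact_def by (rule Max_ge[OF contact_set_finite[OF assms(1)]]) (use assms in blast)

lemma contact_in:
  assumes "f \<noteq> 0" "\<exists>\<gamma>'\<in>NP_roots f. \<gamma>' \<noteq> \<gamma>"
  shows "\<exists>\<gamma>0. \<gamma>0 \<in> NP_roots f \<and> \<gamma>0 \<noteq> \<gamma> \<and> contact \<gamma> f = pord (\<lambda>q. \<gamma> q - \<gamma>0 q)"
proof -
  have "contact \<gamma> f \<in> {pord (\<lambda>q. \<gamma> q - \<gamma>' q) | \<gamma>'. \<gamma>' \<in> NP_roots f \<and> \<gamma>' \<noteq> \<gamma>}"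
    unfolding contact_def by (rule Max_in[OF contact_set_finite[OF assms(1)]]) (use assms(2) in blast)
  then show ?thesis by blast
qed

lemma contact_contra:
  assumes f0: "f \<noteq> 0" and g: "\<gamma> \<in> NP_roots f" and x: "\<xi> \<in> NP_roots f" "\<xi> \<noteq> \<gamma>"
    and agree: "\<And>q. q \<le> contact \<gamma> f \<Longrightarrow> \<gamma> q = \<xi> q"
  shows False
proof -
  have lev: "level (den \<gamma> * den \<xi>) (\<lambda>q. \<gamma> q - \<xi> q)"
    using root_level[OF g] root_level[OF x(1)] diff_level by blast
  have nz: "(\<lambda>q. \<gamma> q - \<xi> q) \<noteq> (\<lambda>_. 0)"
  proof
    assume "(\<lambda>q. \<gamma> q - \<xi> q) = (\<lambda>_. 0)"
    then have "\<xi> = \<gamma>" by (auto simp: fun_eq_iff)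
    with x(2) show False by simp
  qed
  have "contact \<gamma> f < pord (\<lambda>q. \<gamma> q - \<xi> q)"
    by (rule pord_gt[OF lev nz]) (simp add: agree)
  moreover have "pord (\<lambda>q. \<gamma> q - \<xi> q) \<le> contact \<gamma> f" using contact_ge[OF f0 x(1) x(2)] .
  ultimately show False by simp
qed

lemma dvd_roots:
  assumes "h dvd f" "\<xi> \<in> NP_roots h"
  shows "\<xi> \<in> NP_roots f"
proof -
  obtain k where f: "f = h * k" using assms(1) by blast
  have l: "level (den \<xi>) \<xi>" and z: "\<xi> 0 = 0" using root_level[OF assms(2)] by auto
  have N0: "den \<xi> > 0" using l level_pos by blast
  interpret Y: rh "yfps (den \<xi>)" by (rule rh_yfps[OF N0])
  have "poly (lift (den \<xi>) h) (to_fps (den \<xi>) \<xi>) = 0" using NP_roots_iff[OF l z] assms(2) by simp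
  then have "poly (lift (den \<xi>) f) (to_fps (den \<xi>) \<xi>) = 0"
    by (simp add: f lift_def Y.map_mult)
  then show ?thesis using NP_roots_iff[OF l z] by simp
qed

lemma part_iii:
  assumes f0: "f \<noteq> 0" and g: "\<gamma> \<in> NP_roots f"
    and m: "NP_root_mod (gcd f g) (contact \<gamma> f) (truncated \<gamma> f)"
  shows "\<gamma> \<in> NP_roots g"
proof -
  let ?t = "truncated \<gamma> f" and ?\<rho> = "contact \<gamma> f"
  obtain \<xi> where x: "\<xi> \<in> NP_roots (gcd f g)" "\<xi> = ?t \<or> ?\<rho> < pord (\<lambda>y. ?t y - \<xi> y)"
    using m by (auto simp: NP_root_mod_def)
  have xf: "\<xi> \<in> NP_roots f" using dvd_roots[OF gcd_dvd1 x(1)] .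
  have lt: "level (den \<gamma>) ?t"
  proof (rule level_sub[of "den \<gamma>" \<gamma>])
    show "level (den \<gamma>) \<gamma>" using root_level[OF g] by blast
    fix q assume "?t q \<noteq> 0"
    then show "\<gamma> q \<noteq> 0" by (simp add: truncated_def split: if_splits)
  qed
  have agree: "\<gamma> q = \<xi> q" if q: "q \<le> ?\<rho>" for q
  proof (cases "\<xi> = ?t")
    case True
    then show ?thesis using q by (simp add: truncated_def)
  next
    case False
    then have pg: "?\<rho> < pord (\<lambda>y. ?t y - \<xi> y)" using x(2) by simp
    have lev: "level (den \<gamma> * den \<xi>) (\<lambda>y. ?t y - \<xi> y)"
      using lt root_level[OF xf] diff_level by blast
    have "?t q = \<xi> q"
    proof (rule ccontr)
      assume "?t q \<noteq> \<xi> q"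
      then have "pord (\<lambda>y. ?t y - \<xi> y) \<le> q" using pord_le[OF lev] by simp
      with pg q show False by simp
    qed
    then show ?thesis using q by (simp add: truncated_def)
  qed
  have "\<xi> = \<gamma>"
  proof (rule ccontr)
    assume "\<xi> \<noteq> \<gamma>"
    from contact_contra[OF f0 g xf this agree] show False .
  qed
  then have "\<gamma> \<in> NP_roots (gcd f g)" using x(1) by simp
  then show ?thesis using dvd_roots[OF gcd_dvd2] by blast
qed

lemma cj_yfps: "cj (yfps N a) = yfps N a"
  by (simp add: cj_def yfps_def fps_eq_iff)

lemma part_i:
  assumes f0: "f \<noteq> 0" and g: "\<gamma> \<in> NP_roots f" and r: "is_real (truncated \<gamma> f)"
  shows "is_real \<gamma>"
proof -
  interpret C: rh cj by (rule rh_cj)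
  let ?M = "den \<gamma>"
  have l: "level ?M \<gamma>" and z: "\<gamma> 0 = 0" using root_level[OF g] by auto
  define \<xi> where "\<xi> = (\<lambda>q. cnj (\<gamma> q))"
  have lx: "level ?M \<xi>"
  proof (rule level_sub[of ?M \<gamma>])
    show "level ?M \<gamma>" by (fact l)
    fix q assume "\<xi> q \<noteq> 0"
    then show "\<gamma> q \<noteq> 0" by (simp add: \<xi>_def)
  qed
  have zx: "\<xi> 0 = 0" using z by (simp add: \<xi>_def)
  have tx: "to_fps ?M \<xi> = cj (to_fps ?M \<gamma>)" by (simp add: \<xi>_def to_fps_def cj_def)
  have ml: "map_poly cj (lift ?M f) = lift ?M f"
  proof -
    have "cj \<circ> yfps ?M = yfps ?M" by (rule ext) (simp add: cj_yfps)
    then show ?thesis unfolding lift_def by (simp add: map_poly_map_poly)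
  qed
  have "poly (lift ?M f) (to_fps ?M \<gamma>) = 0" using NP_roots_iff[OF l z] g by simp
  then have "poly (lift ?M f) (to_fps ?M \<xi>) = 0"
    using C.poly_map[of "lift ?M f" "to_fps ?M \<gamma>"] by (simp add: ml tx)
  then have xr: "\<xi> \<in> NP_roots f" using NP_roots_iff[OF lx zx] by simp
  have "\<xi> = \<gamma>"
  proof (rule ccontr)
    assume ne: "\<xi> \<noteq> \<gamma>"
    have "\<gamma> q = \<xi> q" if "q \<le> contact \<gamma> f" for q
    proof -
      have "Im (\<gamma> q) = 0" using r that by (simp add: is_real_def truncated_def split: if_splits)
      then show ?thesis by (simp add: \<xi>_def complex_eq_iff)
    qed
    from contact_contra[OF f0 g xr ne this] show False .
  qed
  then have "Im (\<gamma> q) = 0" for q by (metis \<xi>_def complex_cnj_cancel_iff Im_complex_of_real complex_cnj_complex_of_real complex_cnj_zero_iff cnj.sel(2) neg_equal_zero)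
  then show ?thesis by (simp add: is_real_def)
qed

lemma poly_lin0: "poly [:0, b:] x = x * b"
  by simp

lemma part_ii_setup:
  assumes f0: "f \<noteq> 0" and g: "\<gamma> \<in> NP_roots f" and ex1: "\<exists>\<gamma>'\<in>NP_roots f. \<gamma>' \<noteq> \<gamma>"
  shows "\<exists>N a. level N \<gamma> \<and> contact \<gamma> f = of_nat a / of_nat N"
proof -
  obtain \<gamma>0 where g0: "\<gamma>0 \<in> NP_roots f" "\<gamma>0 \<noteq> \<gamma>" "contact \<gamma> f = pord (\<lambda>q. \<gamma> q - \<gamma>0 q)"
    using contact_in[OF f0 ex1] by blast
  define N where "N = den \<gamma> * den \<gamma>0"
  have LN: "level N (\<lambda>q. \<gamma> q - \<gamma>0 q)"
    unfolding N_def using root_level[OF g] root_level[OF g0(1)] diff_level by blast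
  have nz: "(\<lambda>q. \<gamma> q - \<gamma>0 q) \<noteq> (\<lambda>_. 0)"
  proof
    assume "(\<lambda>q. \<gamma> q - \<gamma>0 q) = (\<lambda>_. 0)"
    then have "\<gamma>0 = \<gamma>" by (auto simp: fun_eq_iff)
    with g0(2) show False by simp
  qed
  have "level N \<gamma>" unfolding N_def
    using root_level[OF g] root_level[OF g0(1)] level_mult level_pos by blast
  moreover have "contact \<gamma> f = of_nat (subdegree (to_fps N (\<lambda>q. \<gamma> q - \<gamma>0 q))) / of_nat N"
    using pord_char(1)[OF LN nz] g0(3) by simp
  ultimately show ?thesis by blast
qed

lemma frac_le_iff: "0 < D \<Longrightarrow> (of_nat n / of_nat D \<le> (of_nat k / of_nat D :: rat)) \<longleftrightarrow> n \<le> k"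
  by (simp add: divide_le_cancel)

lemma frac_eq_iff:
  assumes N: "0 < N"
  shows "(of_nat i * (of_nat a / of_nat N) + of_nat n / of_nat N = (of_nat u / of_nat N :: rat))
         \<longleftrightarrow> a * i + n = u"
proof -
  have "(of_nat i * (of_nat a / of_nat N) + of_nat n / of_nat N :: rat) = of_nat (a * i + n) / of_nat N"
    using N by (simp add: field_simps)
  then show ?thesis using N by (simp add: divide_cancel_right del: of_nat_add of_nat_mult)
qed

lemma part_ii_main:
  assumes f0: "f \<noteq> 0" and g: "\<gamma> \<in> NP_roots f" and LgN: "level N \<gamma>"
    and \<rho>a: "contact \<gamma> f = of_nat a / of_nat N"
  shows "\<exists>F::real set. finite F \<and> (\<forall>c. c \<notin> F \<longrightarrow>
          mult_root f \<gamma> = Min {i. \<exists>e. of_nat i * contact \<gamma> f + e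
                                   = pord (peval f (approx (contact \<gamma> f) (truncated \<gamma> f) c))
                               \<and> shift_coeff f (truncated \<gamma> f) i e \<noteq> 0})"
proof -
  interpret R: rh "red :: complex fps \<Rightarrow> complex" by (rule rh_red)
  define \<rho> where "\<rho> = contact \<gamma> f"
  define \<gamma>t where "\<gamma>t = truncated \<gamma> f"
  have N0: "N > 0" using LgN level_pos by blast
  have z: "\<gamma> 0 = 0" using root_level[OF g] by blast
  have pu: "puiseux \<gamma>" using g by (simp add: NP_roots_def)
  have LtN: "level N \<gamma>t"
  proof (rule level_sub[of N \<gamma>])
    show "level N \<gamma>" by (fact LgN)
    fix q assume "\<gamma>t q \<noteq> 0"
    then show "\<gamma> q \<noteq> 0" by (simp add: \<gamma>t_def truncated_def split: if_splits)
  qed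
  have le_iff: "(of_nat n / of_nat N \<le> (of_nat k / of_nat N :: rat)) \<longleftrightarrow> n \<le> k" for n k
    using N0 by (simp add: divide_le_cancel)
  define \<Gamma> where "\<Gamma> = to_fps N \<gamma>"
  define \<Gamma>t where "\<Gamma>t = to_fps N \<gamma>t"
  have \<Gamma>t_nth: "\<Gamma>t $ n = (if n \<le> a then \<Gamma> $ n else 0)" for n
    using le_iff[of n a] by (simp add: \<Gamma>t_def \<Gamma>_def to_fps_def \<gamma>t_def truncated_def \<rho>a)
  define \<delta> where "\<delta> = \<Gamma> - \<Gamma>t"
  have \<delta>_low: "\<delta> $ n = 0" if "n \<le> a" for n using that by (simp add: \<delta>_def \<Gamma>t_nth)
  define P where "P = lift N f"
  have P0: "P \<noteq> 0" using lift_nz[OF N0 f0] by (simp add: P_def)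
  define m where "m = mult_root f \<gamma>"
  have m: "m = order \<Gamma> P" using mult_root_any[OF f0 pu LgN] by (simp add: m_def \<Gamma>_def P_def)
  obtain H0 where H0: "P = [:- \<Gamma>, 1:] ^ m * H0" "\<not> [:- \<Gamma>, 1:] dvd H0"
    using order_decomp[OF P0] m by blast
  have H0\<Gamma>: "poly H0 \<Gamma> \<noteq> 0" using H0(2) by (simp add: poly_eq_0_iff_dvd)
  define F where "F = pcompose P [:\<Gamma>t, 1:]"
  define H where "H = pcompose H0 [:\<Gamma>t, 1:]"
  have FH: "F = [:- \<delta>, 1:] ^ m * H"
    by (simp add: F_def H_def H0(1) pcompose_mult pcompose_power_left pcompose_pCons \<delta>_def)
  have H\<delta>: "poly H \<delta> \<noteq> 0" using H0\<Gamma> by (simp add: H_def poly_pcompose \<delta>_def)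
  have H_nz: "H \<noteq> 0" using H\<delta> by auto
  define Sc where "Sc = (\<lambda>Q::complex fps poly. pcompose Q [:0, fps_X ^ a:])"
  have degX: "degree [:0, fps_X ^ a :: complex fps:] > 0" by simp
  have ScH_nz: "Sc H \<noteq> 0" using H_nz by (simp add: Sc_def pcompose_eq_0_iff[OF degX])
  define W where "W = nrm (Sc H)"
  define cH where "cH = cv (Sc H)"
  have ScH: "Sc H = smult (fps_X ^ cH) W" and W_nz: "rp W \<noteq> 0"
    using nrm_decomp[OF ScH_nz] by (simp_all add: W_def cH_def)
  define \<delta>' where "\<delta>' = fps_shift a \<delta>"
  have \<delta>\<delta>': "\<delta> = fps_X ^ a * \<delta>'"
    unfolding \<delta>'_def by (rule fps_X_power_shift[symmetric]) (simp add: \<delta>_low)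
  have \<delta>'0: "\<delta>' $ 0 = 0" by (simp add: \<delta>'_def \<delta>_low)
  have ScL: "Sc [:- \<delta>, 1:] = smult (fps_X ^ a) [:- \<delta>', 1:]"
    by (simp add: Sc_def pcompose_pCons \<delta>\<delta>')
  define V where "V = [:- \<delta>', 1:] ^ m * W"
  define \<mu> where "\<mu> = a * m + cH"
  have ScF: "Sc F = smult (fps_X ^ \<mu>) V"
  proof -
    have "Sc F = (Sc [:- \<delta>, 1:]) ^ m * Sc H"
      unfolding Sc_def FH by (simp only: pcompose_mult pcompose_power_left)
    also have "\<dots> = (smult (fps_X ^ a) [:- \<delta>', 1:]) ^ m * smult (fps_X ^ cH) W"
      by (simp only: ScL ScH)
    also have "\<dots> = smult ((fps_X ^ a) ^ m * fps_X ^ cH) V"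
      by (simp only: smult_power mult_smult_left mult_smult_right smult_smult V_def mult.commute)
    also have "(fps_X ^ a) ^ m * fps_X ^ cH = (fps_X ^ \<mu> :: complex fps)"
      by (simp add: \<mu>_def power_add power_mult)
    finally show ?thesis .
  qed
  have rpV: "rp V = [:0, 1:] ^ m * rp W"
    by (simp add: V_def R.map_mult R.map_power R.map_pCons R.h_minus \<delta>'0 red_def)
  have V_nz: "rp V \<noteq> 0" using W_nz by (simp add: rpV)
  have W0: "coeff (rp W) 0 \<noteq> 0"
  proof
    assume c0: "coeff (rp W) 0 = 0"
    then have "poly (rp W) 0 = 0" by (simp add: poly_0_coeff_0)
    then have j1: "order 0 (rp W) \<ge> 1" using W_nz order_root[of "rp W" 0] by simp
    obtain q r where qr: "q > 0" "poly (map_poly (ex q) W) r = 0" "r $ 0 = 0"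
      using puiseux_exist[OF W_nz refl j1] by blast
    interpret E: rh "ex q :: complex fps \<Rightarrow> complex fps" by (rule rh_ex[OF qr(1)])
    define \<Xi> where "\<Xi> = ex q \<Gamma>t + fps_X ^ (a * q) * r"
    have e1: "map_poly (ex q) (Sc H) = smult (fps_X ^ (cH * q)) (map_poly (ex q) W)"
      by (simp add: ScH E.map_smult ex_X_power qr(1))
    have e2: "map_poly (ex q) (Sc H) = pcompose (map_poly (ex q) H) [:0, fps_X ^ (a * q):]"
      by (simp add: Sc_def E.map_pcompose E.map_pCons ex_X_power qr(1))
    have rH: "poly (map_poly (ex q) H) (fps_X ^ (a * q) * r) = 0"
    proof -
      have "poly (map_poly (ex q) (Sc H)) r = 0" by (simp add: e1 qr(2))
      then show ?thesis by (simp add: e2 poly_pcompose mult.commute)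
    qed
    have e3: "map_poly (ex q) H = pcompose (map_poly (ex q) H0) [:ex q \<Gamma>t, 1:]"
      by (simp add: H_def E.map_pcompose E.map_pCons E.h_one)
    have rH0: "poly (map_poly (ex q) H0) \<Xi> = 0"
      using rH by (simp add: e3 poly_pcompose \<Xi>_def)
    have e4: "lift (N * q) f = [:- ex q \<Gamma>, 1:] ^ m * map_poly (ex q) H0"
      by (simp add: lift_ex[OF N0 qr(1)] P_def[symmetric] H0(1) E.map_mult E.map_power E.map_pCons
          E.h_minus E.h_one)
    have rP: "poly (lift (N * q) f) \<Xi> = 0" by (simp add: e4 rH0)
    define \<xi> where "\<xi> = of_fps (N * q) \<Xi>"
    have Nq: "N * q > 0" using N0 qr(1) by simp
    have lx: "level (N * q) \<xi>" unfolding \<xi>_def by (rule level_of_fps[OF Nq])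
    have tx: "to_fps (N * q) \<xi> = \<Xi>" unfolding \<xi>_def by (rule to_fps_of_fps[OF Nq])
    have \<Gamma>t0: "\<Gamma>t $ 0 = 0" using z by (simp add: \<Gamma>t_def to_fps_def \<gamma>t_def truncated_def)
    have X0: "(fps_X ^ (a * q) * r) $ 0 = 0" using qr(3) by (simp add: fps_X_power_mult_nth)
    have zx: "\<xi> 0 = 0"
    proof -
      have "\<xi> 0 = \<Xi> $ 0" using of_fps_nth[OF Nq, of \<Xi> 0] by (simp add: \<xi>_def)
      also have "\<dots> = 0" using \<Gamma>t0 X0 by (simp add: \<Xi>_def)
      finally show ?thesis .
    qed
    have xr: "\<xi> \<in> NP_roots f" using NP_roots_iff[OF lx zx] rP tx by simp
    have tg: "to_fps (N * q) \<gamma> = ex q \<Gamma>" unfolding \<Gamma>_def by (rule to_fps_ex[OF LgN qr(1)])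
    have lg: "level (N * q) \<gamma>" by (rule level_mult[OF LgN qr(1)])
    have exd: "ex q \<Gamma> = ex q \<Gamma>t + ex q \<delta>" by (simp add: \<delta>_def E.h_diff)
    have ne: "\<xi> \<noteq> \<gamma>"
    proof
      assume "\<xi> = \<gamma>"
      then have "\<Xi> = ex q \<Gamma>" using tx tg by simp
      then have "fps_X ^ (a * q) * r = ex q \<delta>" using exd by (simp add: \<Xi>_def)
      then have "poly (map_poly (ex q) H) (ex q \<delta>) = 0" using rH by simp
      then have "ex q (poly H \<delta>) = 0" by (simp add: E.poly_map)
      then have "poly H \<delta> = 0" using ex_eq_0_iff[OF qr(1)] by blast
      with H\<delta> show False by simp
    qed
    have agree: "\<gamma> y = \<xi> y" if y: "y \<le> contact \<gamma> f" for y
    proof (cases "\<exists>n::nat. y = of_nat n / of_nat (N * q)")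
      case True
      then obtain n where n: "y = of_nat n / of_nat (N * q)" by blast
      have e: "(of_nat a / of_nat N :: rat) = of_nat (a * q) / of_nat (N * q)" using qr(1) by simp
      have "(of_nat n :: rat) / of_nat (N * q) \<le> of_nat (a * q) / of_nat (N * q)"
        using y unfolding n \<rho>a e .
      then have na: "n \<le> a * q" using frac_le_iff[OF Nq] by blast
      have d0: "ex q \<delta> $ n = 0"
      proof (cases "q dvd n")
        case True
        then obtain t where t: "n = q * t" by blast
        then have "t \<le> a" using na qr(1) by (simp add: mult.commute)
        then show ?thesis using t qr(1) by (simp add: \<delta>_low)
      next
        case False then show ?thesis by (simp add: ex_nth)
      qed
      have x0: "(fps_X ^ (a * q) * r) $ n = 0"
      proof (cases "n < a * q")
        case True then show ?thesis by (simp add: fps_X_power_mult_nth)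
      next
        case False
        then have "n = a * q" using na by simp
        then show ?thesis using qr(3) by (simp add: fps_X_power_mult_nth)
      qed
      have "\<gamma> y = to_fps (N * q) \<gamma> $ n" using n by (simp add: to_fps_def)
      also have "\<dots> = \<Xi> $ n" using tg exd d0 x0 by (simp add: \<Xi>_def)
      also have "\<dots> = \<xi> y" using of_fps_nth[OF Nq, of \<Xi> n] n by (simp add: \<xi>_def)
      finally show ?thesis .
    next
      case False
      have "\<gamma> y = 0" using lg False by (auto simp: level_def)
      moreover have "\<xi> y = 0" using lx False by (auto simp: level_def)
      ultimately show ?thesis by simp
    qed
    from contact_contra[OF f0 g xr ne agree] show False .
  qed
  define FF where "FF = {c::real. poly (rp V) (of_real c - \<Gamma> $ a) = 0}"
  have finFF: "finite FF"
  proof -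
    have "FF = (\<lambda>c. of_real c - \<Gamma> $ a) -` {x. poly (rp V) x = 0}" by (auto simp: FF_def)
    moreover have "inj (\<lambda>c::real. (of_real c :: complex) - \<Gamma> $ a)" by (rule injI) simp
    ultimately show ?thesis using finite_vimageI[OF poly_roots_finite[OF V_nz]] by simp
  qed
  have cF: "coeff (Sc F) i = fps_X ^ (a * i) * coeff F i" for i
    by (simp add: Sc_def coeff_pcompose_linear power_mult)
  have keyc: "coeff V i $ 0 = (if \<mu> < a * i then 0 else coeff F i $ (\<mu> - a * i))" for i
  proof -
    have "coeff V i $ 0 = (fps_X ^ \<mu> * coeff V i) $ \<mu>" by (simp add: fps_X_power_mult_nth)
    also have "fps_X ^ \<mu> * coeff V i = fps_X ^ (a * i) * coeff F i" using ScF cF[of i] by simp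
    finally show ?thesis by (simp add: fps_X_power_mult_nth)
  qed
  have sc: "shift_coeff f \<gamma>t i = of_fps N (coeff F i)" for i
    using shift_coeff_any[OF LtN] by (simp add: F_def P_def \<Gamma>t_def)
  have crp: "coeff (rp V) i = coeff V i $ 0" for i by (simp add: coeff_map_poly red_def)
  have setEq: "{i. \<exists>e. of_nat i * \<rho> + e = of_nat \<mu> / of_nat N \<and> shift_coeff f \<gamma>t i e \<noteq> 0}
      = {i. coeff (rp V) i \<noteq> 0}"
  proof (rule set_eqI)
    fix i
    show "i \<in> {i. \<exists>e. of_nat i * \<rho> + e = of_nat \<mu> / of_nat N \<and> shift_coeff f \<gamma>t i e \<noteq> 0}
        \<longleftrightarrow> i \<in> {i. coeff (rp V) i \<noteq> 0}"
    proof
      assume "i \<in> {i. \<exists>e. of_nat i * \<rho> + e = of_nat \<mu> / of_nat N \<and> shift_coeff f \<gamma>t i e \<noteq> 0}"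
      then obtain e where e: "of_nat i * \<rho> + e = of_nat \<mu> / of_nat N" "of_fps N (coeff F i) e \<noteq> 0"
        by (auto simp: sc)
      then obtain n where n: "e = of_nat n / of_nat N" "of_fps N (coeff F i) e = coeff F i $ n"
        using of_fps_cases[OF N0, of "coeff F i" e] by auto
      have hm: "a * i + n = \<mu>" using e(1) n(1) \<rho>_def \<rho>a frac_eq_iff[OF N0] by simp
      then have "\<mu> - a * i = n" "\<not> \<mu> < a * i" by auto
      then show "i \<in> {i. coeff (rp V) i \<noteq> 0}" using e(2) n(2) by (simp add: crp keyc)
    next
      assume "i \<in> {i. coeff (rp V) i \<noteq> 0}"
      then have nz: "\<not> \<mu> < a * i" "coeff F i $ (\<mu> - a * i) \<noteq> 0"
        by (auto simp: crp keyc split: if_splits)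
      define e where "e = (of_nat (\<mu> - a * i) :: rat) / of_nat N"
      have "of_fps N (coeff F i) e = coeff F i $ (\<mu> - a * i)" unfolding e_def by (rule of_fps_nth[OF N0])
      moreover have "of_nat i * \<rho> + e = of_nat \<mu> / of_nat N"
        using nz(1) \<rho>_def \<rho>a frac_eq_iff[OF N0, of i a "\<mu> - a * i" \<mu>] by (simp add: e_def)
      ultimately show "i \<in> {i. \<exists>e. of_nat i * \<rho> + e = of_nat \<mu> / of_nat N \<and> shift_coeff f \<gamma>t i e \<noteq> 0}"
        using nz(2) by (auto simp: sc)
    qed
  qed
  have minm: "Min {i. coeff (rp V) i \<noteq> 0} = m"
  proof (rule Min_eqI)
    have cV: "coeff (rp V) i = (if i < m then 0 else coeff (rp W) (i - m))" for i
      using coeff_monom_mult[of 1 m "rp W" i] by (simp add: rpV monom_altdef)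
    show "finite {i. coeff (rp V) i \<noteq> 0}"
      by (rule finite_subset[of _ "{..degree (rp V)}"]) (auto intro: le_degree)
    show "m \<le> y" if "y \<in> {i. coeff (rp V) i \<noteq> 0}" for y
      using that cV[of y] by (auto split: if_splits)
    show "m \<in> {i. coeff (rp V) i \<noteq> 0}" using cV[of m] W0 by simp
  qed
  show ?thesis
  proof (intro exI[of _ FF] conjI allI impI)
    show "finite FF" by (fact finFF)
    fix c assume cF': "c \<notin> FF"
    define b where "b = of_real c - \<Gamma> $ a"
    have pb: "poly (rp V) b \<noteq> 0" using cF' by (simp add: FF_def b_def)
    define A where "A = approx \<rho> \<gamma>t c"
    have LA: "level N A"
      unfolding level_def
    proof (intro conjI allI impI)
      show "N > 0" by (fact N0)
      fix y assume "A y \<noteq> 0"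
      then have "(y < \<rho> \<and> \<gamma>t y \<noteq> 0) \<or> y = \<rho>" by (auto simp: A_def approx_def split: if_splits)
      then show "\<exists>k::nat. y = of_nat k / of_nat N"
        using LtN \<rho>_def \<rho>a by (auto simp: level_def)
    qed
    have tA: "to_fps N A = \<Gamma>t + fps_const b * fps_X ^ a"
    proof (rule fps_ext)
      fix n
      have lt: "(of_nat n / of_nat N < (of_nat a / of_nat N :: rat)) \<longleftrightarrow> n < a"
        using N0 by (simp add: divide_less_cancel)
      have eq: "(of_nat n / of_nat N = (of_nat a / of_nat N :: rat)) \<longleftrightarrow> n = a"
        using N0 by simp
      have r: "(fps_const b * fps_X ^ a) $ n = (if n = a then b else 0)"
        by (simp add: fps_X_power_mult_right_nth)
      show "to_fps N A $ n = (\<Gamma>t + fps_const b * fps_X ^ a) $ n"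
        using lt eq \<Gamma>t_nth[of n]
        by (auto simp: to_fps_def A_def approx_def \<rho>_def[symmetric] \<rho>a[symmetric] r b_def
            \<Gamma>t_def \<Gamma>_def)
    qed
    have ev: "poly P (\<Gamma>t + fps_const b * fps_X ^ a) = fps_X ^ \<mu> * poly V (fps_const b)"
    proof -
      have "poly P (\<Gamma>t + fps_const b * fps_X ^ a) = poly F (fps_const b * fps_X ^ a)"
        by (simp add: F_def poly_pcompose)
      also have "\<dots> = poly (Sc F) (fps_const b)" by (simp add: Sc_def poly_pcompose)
      also have "\<dots> = fps_X ^ \<mu> * poly V (fps_const b)" by (simp add: ScF)
      finally show ?thesis .
    qed
    have v0: "poly V (fps_const b) $ 0 = poly (rp V) b"
      using poly_rp[of V "fps_const b"] by (simp add: red_def)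
    define Y where "Y = fps_X ^ \<mu> * poly V (fps_const b)"
    have Y\<mu>: "Y $ \<mu> \<noteq> 0" using v0 pb by (simp add: Y_def fps_X_power_mult_nth)
    have Ynz: "Y \<noteq> 0" using Y\<mu> by auto
    have sY: "subdegree Y = \<mu>"
      by (rule subdegreeI[OF Y\<mu>]) (simp add: Y_def fps_X_power_mult_nth)
    have po: "pord (peval f A) = of_nat \<mu> / of_nat N"
      using peval_any[OF LA] tA ev pord_of_fps[OF N0 Ynz] sY by (simp add: P_def Y_def)
    show "mult_root f \<gamma> = Min {i. \<exists>e. of_nat i * contact \<gamma> f + e
                                   = pord (peval f (approx (contact \<gamma> f) (truncated \<gamma> f) c))
                               \<and> shift_coeff f (truncated \<gamma> f) i e \<noteq> 0}"
      using setEq minm po by (simp add: \<rho>_def[symmetric] \<gamma>t_def[symmetric] A_def[symmetric] m_def)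
  qed
qed

theorem theorem4p1:
  fixes f :: "real poly poly" and \<gamma> :: pseries
  assumes "regular_x f"
    and "\<gamma> \<in> NP_roots f"
    and "\<exists>\<gamma>'\<in>NP_roots f. \<gamma>' \<noteq> \<gamma>"
  shows "(is_real (truncated \<gamma> f) \<longrightarrow> is_real \<gamma>)
    \<and> (\<exists>F::real set. finite F \<and> (\<forall>c. c \<notin> F \<longrightarrow>
          mult_root f \<gamma> = Min {i. \<exists>e. of_nat i * contact \<gamma> f + e
                                   = pord (peval f (approx (contact \<gamma> f) (truncated \<gamma> f) c))
                               \<and> shift_coeff f (truncated \<gamma> f) i e \<noteq> 0}))
    \<and> (\<forall>g :: real poly poly. regular_x g \<longrightarrow>
          NP_root_mod (gcd f g) (contact \<gamma> f) (truncated \<gamma> f) \<longrightarrow> \<gamma> \<in> NP_roots g)"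
proof -
  have f0: "f \<noteq> 0" using assms(1) by (rule regular_nz)
  have i: "is_real (truncated \<gamma> f) \<longrightarrow> is_real \<gamma>"
    using part_i[OF f0 assms(2)] by blast
  obtain N a where Na: "level N \<gamma>" "contact \<gamma> f = of_nat a / of_nat N"
    using part_ii_setup[OF f0 assms(2,3)] by blast
  have ii: "\<exists>F::real set. finite F \<and> (\<forall>c. c \<notin> F \<longrightarrow>
          mult_root f \<gamma> = Min {i. \<exists>e. of_nat i * contact \<gamma> f + e
                                   = pord (peval f (approx (contact \<gamma> f) (truncated \<gamma> f) c))
                               \<and> shift_coeff f (truncated \<gamma> f) i e \<noteq> 0})"
    by (rule part_ii_main[OF f0 assms(2) Na])
  have iii: "\<forall>g :: real poly poly. regular_x g \<longrightarrow>
          NP_root_mod (gcd f g) (contact \<gamma> f) (truncated \<gamma> f) \<longrightarrow> \<gamma> \<in> NP_roots g"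
    using part_iii[OF f0 assms(2)] by blast
  show ?thesis using i ii iii by blast
qed

end
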